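(* Let $N\ge1$, let $(X_j)_{j\in\mathbb{N}}$ be an i.i.d. sequence of random vectors uniformly distributed on the unit sphere $S^{N-1}\subset\mathbb{R}^N$, and let $Z$ be a centered Gaussian random vector in $\mathbb{R}^N$ with covariance matrix $\frac1N I_N$ (the covariance of $X_1$). Then \[ \lim_{n\to\infty}\Big\|\sum_{j=1}^n \tfrac{1}{\sqrt n}X_j\Big\|_{\psi_2}=\|Z\|_{\psi_2}=\sqrt{\frac{2}{N}}\sqrt{\frac{1}{1-(1/2)^{2/N}}}. \]
   Context: For an $\mathbb{R}^N$-valued random vector $X$, $\|X\|_{\psi_2}=\inf\{c>0:\ \mathbb{E}\exp(\|X\|^2/c^2)\le 2\}$, where $\|\cdot\|$ is the Euclidean norm on $\mathbb{R}^N$. *)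

theory Defs
  imports "HOL-Probability.Probability"
begin

definition psi2_norm :: "'a measure \<Rightarrow> ('a \<Rightarrow> 'b::real_normed_vector) \<Rightarrow> real" where
  "psi2_norm M X = Inf {c::real. c > 0 \<and>
      (\<integral>\<^sup>+ \<omega>. ennreal (exp ((norm (X \<omega>))\<^sup>2 / c\<^sup>2)) \<partial>M) \<le> 2}"

text \<open>Uniform (normalized surface / cone) measure on the unit sphere S^{N-1}:
  the push-forward of the uniform distribution on the punctured unit ball under x \<mapsto> x/|x|.\<close>
definition uniform_sphere :: "('a::euclidean_space) measure" where
  "uniform_sphere = distr (uniform_measure lborel (ball 0 1 - {0})) borel (\<lambda>x. x /\<^sub>R norm x)"

definition gauss_cov_inv_dim :: "'a::euclidean_space \<Rightarrow> real" where
  "gauss_cov_inv_dim x = (real DIM('a) / (2 * pi)) powr (real DIM('a) / 2)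
      * exp (- real DIM('a) * (norm x)\<^sup>2 / 2)"

end

theory Submission
  imports Defs
begin

lemma nn_integral_scale:
  fixes f :: "'a::euclidean_space \<Rightarrow> ennreal"
  assumes [measurable]: "f \<in> borel_measurable borel" and c: "c \<noteq> 0"
  shows "(\<integral>\<^sup>+x. f x \<partial>lborel) = ennreal (\<bar>c\<bar>^DIM('a)) * (\<integral>\<^sup>+x. f (c *\<^sub>R x) \<partial>lborel)"
proof -
  have "(\<integral>\<^sup>+x. f x \<partial>lborel) = (\<integral>\<^sup>+x. f x \<partial>density (distr lborel borel (\<lambda>x. 0 + c *\<^sub>R x)) (\<lambda>_. \<bar>c\<bar>^DIM('a)))"
    using lborel_affine[OF c, of 0] by metis
  also have "\<dots> = ennreal (\<bar>c\<bar>^DIM('a)) * (\<integral>\<^sup>+x. f (c *\<^sub>R x) \<partial>lborel)"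
    by (simp add: nn_integral_density nn_integral_distr nn_integral_cmult)
  finally show ?thesis .
qed

lemma gauss1:
  fixes \<alpha> \<beta> :: real assumes a: "\<alpha> > 0"
  shows "(\<integral>\<^sup>+y. ennreal (exp (\<beta> * y - \<alpha> * y\<^sup>2)) \<partial>lborel) = ennreal (sqrt (pi / \<alpha>) * exp (\<beta>\<^sup>2 / (4 * \<alpha>)))"
proof -
  define C where "C = sqrt (pi / \<alpha>) * exp (\<beta>\<^sup>2 / (4 * \<alpha>))"
  have C: "C \<ge> 0" unfolding C_def using a by (intro mult_nonneg_nonneg) auto
  have eq: "exp (\<beta> * y - \<alpha> * y\<^sup>2) = C * normal_density (\<beta> / (2*\<alpha>)) (1 / sqrt (2*\<alpha>)) y" for y
  proof -
    have s: "(1 / sqrt (2*\<alpha>))\<^sup>2 = 1 / (2*\<alpha>)" using a by (simp add: power_divide)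
    have "sqrt (2 * pi * (1 / (2 * \<alpha>))) = sqrt (pi / \<alpha>)" using a by simp
    moreover have "sqrt (pi/\<alpha>) > 0" using a by simp
    moreover have "exp (\<beta>\<^sup>2 / (4 * \<alpha>)) * exp (- (y - \<beta> / (2 * \<alpha>))\<^sup>2 / (2 * (1 / (2 * \<alpha>))))
        = exp (\<beta> * y - \<alpha> * y\<^sup>2)"
      unfolding exp_add[symmetric] using a by (simp add: field_simps power2_eq_square)
    ultimately show ?thesis unfolding C_def normal_density_def s using a by (simp add: field_simps)
  qed
  have "(\<integral>\<^sup>+y. ennreal (exp (\<beta> * y - \<alpha> * y\<^sup>2)) \<partial>lborel)
      = (\<integral>\<^sup>+y. ennreal C * ennreal (normal_density (\<beta> / (2*\<alpha>)) (1 / sqrt (2*\<alpha>)) y) \<partial>lborel)"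
    by (simp add: eq ennreal_mult C)
  also have "\<dots> = ennreal C * (\<integral>\<^sup>+y. ennreal (normal_density (\<beta> / (2*\<alpha>)) (1 / sqrt (2*\<alpha>)) y) \<partial>lborel)"
    by (simp add: nn_integral_cmult)
  also have "(\<integral>\<^sup>+y. ennreal (normal_density (\<beta> / (2*\<alpha>)) (1 / sqrt (2*\<alpha>)) y) \<partial>lborel) = 1"
  proof -
    have sp: "0 < 1 / sqrt (2*\<alpha>)" using a by simp
    show ?thesis
      using integrable_normal_density[OF sp] integral_normal_density[OF sp]
      by (subst nn_integral_eq_integral) auto
  qed
  finally show ?thesis by (simp add: C_def)
qed

lemma inner_sum_Basis:
  fixes f :: "'a::euclidean_space \<Rightarrow> real"
  assumes "v \<in> Basis" shows "(\<Sum>u\<in>Basis. f u *\<^sub>R u) \<bullet> v = f v"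
  using assms by (simp add: inner_sum_left inner_Basis if_distrib cong: if_cong)

lemma norm_sq_Basis: "(norm (x::'a::euclidean_space))\<^sup>2 = (\<Sum>u\<in>Basis. (x \<bullet> u)\<^sup>2)"
proof -
  have "(norm x)\<^sup>2 = x \<bullet> x" by (simp add: power2_norm_eq_inner)
  also have "\<dots> = (\<Sum>u\<in>Basis. (x \<bullet> u)\<^sup>2)" by (subst euclidean_inner) (simp add: power2_eq_square)
  finally show ?thesis .
qed

lemma gaussN:
  fixes b :: "'a::euclidean_space" and \<alpha> :: real assumes a: "\<alpha> > 0"
  shows "(\<integral>\<^sup>+x. ennreal (exp (b \<bullet> x - \<alpha> * (norm x)\<^sup>2)) \<partial>lborel)
     = ennreal (sqrt (pi / \<alpha>) ^ DIM('a) * exp ((norm b)\<^sup>2 / (4 * \<alpha>)))"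
proof -
  interpret P: product_sigma_finite "\<lambda>_::'a. lborel :: real measure"
    by unfold_locales
  let ?T = "\<lambda>f::'a\<Rightarrow>real. \<Sum>u\<in>Basis. f u *\<^sub>R u"
  have [measurable]: "?T \<in> (\<Pi>\<^sub>M b\<in>Basis. lborel) \<rightarrow>\<^sub>M borel" by measurable
  have "(\<integral>\<^sup>+x. ennreal (exp (b \<bullet> x - \<alpha> * (norm x)\<^sup>2)) \<partial>lborel)
    = (\<integral>\<^sup>+f. ennreal (exp (b \<bullet> ?T f - \<alpha> * (norm (?T f))\<^sup>2)) \<partial>(\<Pi>\<^sub>M b\<in>Basis. lborel))"
    by (subst lborel_eq) (simp add: nn_integral_distr)
  also have "\<dots> = (\<integral>\<^sup>+f. (\<Prod>u\<in>Basis. ennreal (exp ((b \<bullet> u) * f u - \<alpha> * (f u)\<^sup>2))) \<partial>(\<Pi>\<^sub>M b\<in>Basis. lborel))"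
  proof (intro nn_integral_cong)
    fix f :: "'a \<Rightarrow> real"
    have "b \<bullet> ?T f - \<alpha> * (norm (?T f))\<^sup>2 = (\<Sum>u\<in>Basis. (b \<bullet> u) * f u - \<alpha> * (f u)\<^sup>2)"
      by (simp add: norm_sq_Basis[of "?T f"] inner_sum_Basis euclidean_inner[of b "?T f"]
            sum_subtractf sum_distrib_left)
    then show "ennreal (exp (b \<bullet> ?T f - \<alpha> * (norm (?T f))\<^sup>2)) = (\<Prod>u\<in>Basis. ennreal (exp ((b \<bullet> u) * f u - \<alpha> * (f u)\<^sup>2)))"
      by (simp add: exp_sum prod_ennreal)
  qed
  also have "\<dots> = (\<Prod>u\<in>Basis. (\<integral>\<^sup>+y. ennreal (exp ((b \<bullet> u) * y - \<alpha> * y\<^sup>2)) \<partial>lborel))"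
    by (rule P.product_nn_integral_prod) auto
  also have "\<dots> = (\<Prod>u\<in>Basis. ennreal (sqrt (pi / \<alpha>) * exp ((b \<bullet> u)\<^sup>2 / (4 * \<alpha>))))"
    by (simp add: gauss1[OF a])
  also have "\<dots> = ennreal (sqrt (pi / \<alpha>) ^ DIM('a) * exp ((norm b)\<^sup>2 / (4 * \<alpha>)))"
  proof -
    have "(\<Prod>u\<in>Basis. ennreal (sqrt (pi / \<alpha>) * exp ((b \<bullet> u)\<^sup>2 / (4 * \<alpha>))))
       = ennreal (\<Prod>u\<in>Basis. sqrt (pi / \<alpha>) * exp ((b \<bullet> u)\<^sup>2 / (4 * \<alpha>)))"
      using a by (intro prod_ennreal mult_nonneg_nonneg) auto
    also have "(\<Prod>u\<in>Basis. sqrt (pi / \<alpha>) * exp ((b \<bullet> u)\<^sup>2 / (4 * \<alpha>)))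
       = sqrt (pi / \<alpha>) ^ DIM('a) * exp (\<Sum>u\<in>Basis. (b \<bullet> u)\<^sup>2 / (4 * \<alpha>))"
      by (simp add: prod.distrib exp_sum)
    also have "(\<Sum>u\<in>Basis. (b \<bullet> u)\<^sup>2 / (4 * \<alpha>)) = (norm b)\<^sup>2 / (4 * \<alpha>)"
      by (simp add: norm_sq_Basis[of b] sum_divide_distrib)
    finally show ?thesis .
  qed
  finally show ?thesis .
qed



lemma cosh_sums_even: "(\<lambda>k. y ^ (2*k) / fact (2*k)) sums cosh (y::real)"
proof -
  let ?f = "\<lambda>k. y ^ (2*k) / fact (2*k)"
  have "(\<lambda>n. if even n then ?f (n div 2) else 0) sums cosh y"
  proof -
    have "(\<lambda>n. if even n then y ^ n /\<^sub>R fact n else 0) = (\<lambda>n. if even n then ?f (n div 2) else 0)"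
      by (rule ext) (auto elim!: evenE simp: divide_inverse mult.commute)
    then show ?thesis using cosh_converges[of y] by simp
  qed
  from LIMSEQ_linear[OF this[simplified sums_def] pos2, simplified sum_split_even_odd[simplified mult.commute]]
  show ?thesis unfolding sums_def by auto
qed

lemma ennreal_cosh_suminf: "ennreal (cosh (y::real)) = (\<Sum>k. ennreal (y ^ (2*k) / fact (2*k)))"
proof -
  have "(\<Sum>k. ennreal (y ^ (2*k) / fact (2*k))) = ennreal (\<Sum>k. y ^ (2*k) / fact (2*k))"
    using cosh_sums_even[of y] by (intro suminf_ennreal2) (auto simp: sums_iff power_mult)
  also have "\<dots> = cosh y" using cosh_sums_even[of y] by (simp add: sums_iff)
  finally show ?thesis by simp
qed

lemma measurable_normalize[measurable]: "(\<lambda>x::'a::euclidean_space. x /\<^sub>R norm x) \<in> borel_measurable borel"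
  by measurable

lemma sphere_null: "sphere (0::'a::euclidean_space) 1 \<in> null_sets lborel"
  using negligible_sphere[of "0::'a" 1]
  by (auto simp: null_sets_completion_iff negligible_iff_null_sets negligible_convex_frontier)

lemma sphere_nn:
  fixes f :: "'a::euclidean_space \<Rightarrow> ennreal"
  assumes [measurable]: "f \<in> borel_measurable borel"
  shows "(\<integral>\<^sup>+x. f x \<partial>uniform_sphere) =
    (\<integral>\<^sup>+x. f (x /\<^sub>R norm x) * indicator (cball 0 1) x \<partial>lborel) / ennreal (unit_ball_vol DIM('a))"
proof -
  let ?S = "ball (0::'a) 1 - {0}"
  have S[measurable]: "?S \<in> sets lborel" by auto
  have "(\<integral>\<^sup>+x. f x \<partial>uniform_sphere) = (\<integral>\<^sup>+x. f (x /\<^sub>R norm x) \<partial>uniform_measure lborel ?S)"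
    unfolding uniform_sphere_def
    by (subst nn_integral_distr) (auto simp: measurable_cong_sets[OF sets_uniform_measure refl])
  also have "\<dots> = (\<integral>\<^sup>+x. f (x /\<^sub>R norm x) * indicator ?S x \<partial>lborel) / emeasure lborel ?S"
    by (rule nn_integral_uniform_measure) auto
  also have "emeasure lborel ?S = emeasure lborel (ball (0::'a) 1)"
    by (rule emeasure_Diff_null_set) auto
  also have "\<dots> = ennreal (unit_ball_vol DIM('a))" by (simp add: emeasure_ball)
  also have "(\<integral>\<^sup>+x. f (x /\<^sub>R norm x) * indicator ?S x \<partial>lborel) =
       (\<integral>\<^sup>+x. f (x /\<^sub>R norm x) * indicator (cball 0 1) x \<partial>lborel)"
  proof (rule nn_integral_cong_AE)
    have "AE x in lborel. x \<notin> sphere 0 1" using sphere_null by (rule AE_not_in)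
    then show "AE x in lborel. f (x /\<^sub>R norm x) * indicator ?S x = f (x /\<^sub>R norm x) * indicator (cball 0 1) x"
      using AE_lborel_singleton[of 0]
      by eventually_elim (auto simp: indicator_def)
  qed
  finally show ?thesis .
qed

lemma prob_space_uniform_sphere: "prob_space (uniform_sphere :: 'a::euclidean_space measure)"
proof -
  let ?S = "ball (0::'a) 1 - {0}"
  have "emeasure lborel ?S = emeasure lborel (ball (0::'a) 1)"
    by (rule emeasure_Diff_null_set) auto
  also have "\<dots> = ennreal (unit_ball_vol DIM('a))" by (simp add: emeasure_ball)
  finally have e: "emeasure lborel ?S = ennreal (unit_ball_vol DIM('a))" .
  have "prob_space (uniform_measure lborel ?S)"
  proof (rule prob_space_uniform_measure)
    have p: "unit_ball_vol (real DIM('a)) > 0" by (rule unit_ball_vol_pos) simp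
    have "unit_ball_vol (real DIM('a)) \<noteq> 0" using p by linarith
    then show "emeasure lborel ?S \<noteq> 0" unfolding e by simp
  qed (simp add: e)
  then show ?thesis unfolding uniform_sphere_def
    by (rule prob_space.prob_space_distr) (auto simp: measurable_cong_sets[OF sets_uniform_measure refl])
qed

lemma sets_uniform_sphere[simp]: "sets (uniform_sphere :: 'a::euclidean_space measure) = sets borel"
  by (simp add: uniform_sphere_def)

lemma sphere_sym:
  fixes f :: "'a::euclidean_space \<Rightarrow> ennreal"
  assumes [measurable]: "f \<in> borel_measurable borel"
  shows "(\<integral>\<^sup>+x. f (- x) \<partial>uniform_sphere) = (\<integral>\<^sup>+x. f x \<partial>uniform_sphere)"
proof -
  have [measurable]: "cball (0::'a) 1 \<in> sets borel" by simp
  have "(\<integral>\<^sup>+x. f (x /\<^sub>R norm x) * indicator (cball 0 1) x \<partial>lborel)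
     = ennreal (\<bar>-1\<bar>^DIM('a)) * (\<integral>\<^sup>+x. f (((-1) *\<^sub>R x) /\<^sub>R norm ((-1) *\<^sub>R x)) * indicator (cball 0 1) ((-1) *\<^sub>R x) \<partial>lborel)"
    by (rule nn_integral_scale) measurable
  also have "\<dots> = (\<integral>\<^sup>+x. f (- (x /\<^sub>R norm x)) * indicator (cball 0 1) x \<partial>lborel)"
    by (simp add: indicator_def)
  finally show ?thesis by (simp add: sphere_nn)
qed



lemma nn_FTC_Icc:
  fixes f F :: "real \<Rightarrow> real"
  assumes ab: "a \<le> b" and d: "\<And>x. x \<in> {a..b} \<Longrightarrow> (F has_real_derivative f x) (at x)"
    and nn: "\<And>x. x \<in> {a..b} \<Longrightarrow> 0 \<le> f x"
  shows "(\<integral>\<^sup>+x. ennreal (f x) * indicator {a..b} x \<partial>lborel) = ennreal (F b - F a)"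
proof (rule nn_integral_has_integral_lebesgue')
  show "(f has_integral F b - F a) {a..b}"
    using ab by (intro fundamental_theorem_of_calculus)
      (auto intro!: has_field_derivative_at_within d simp: has_real_derivative_iff_has_vector_derivative[symmetric])
qed (use nn in auto)

lemma hom_cball:
  fixes g :: "'a::euclidean_space \<Rightarrow> real"
  assumes [measurable]: "g \<in> borel_measurable borel"
    and hom: "\<And>s x. s > 0 \<Longrightarrow> g (s *\<^sub>R x) = s ^ d * g x" and s: "s \<ge> 0"
  shows "(\<integral>\<^sup>+x. ennreal (g x) * indicator (cball 0 s) x \<partial>lborel)
     = ennreal (s ^ (DIM('a) + d)) * (\<integral>\<^sup>+x. ennreal (g x) * indicator (cball 0 1) x \<partial>lborel)"
proof (cases "s = 0")
  case True
  have ae: "AE x in lborel. ennreal (g x) * indicator (cball 0 s) x = 0"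
    using AE_lborel_singleton[of 0] by eventually_elim (auto simp: True indicator_def)
  have "(\<integral>\<^sup>+x. ennreal (g x) * indicator (cball 0 s) x \<partial>lborel) = (\<integral>\<^sup>+x. 0 \<partial>lborel)"
    using nn_integral_cong_AE[OF ae] by simp
  then show ?thesis using True by (simp add: zero_power DIM_positive)
next
  case False
  then have sp: "s > 0" using s by simp
  have [measurable]: "cball (0::'a) s \<in> sets borel" "cball (0::'a) 1 \<in> sets borel" by auto
  have "(\<integral>\<^sup>+x. ennreal (g x) * indicator (cball 0 s) x \<partial>lborel)
     = ennreal (\<bar>s\<bar>^DIM('a)) * (\<integral>\<^sup>+x. ennreal (g (s *\<^sub>R x)) * indicator (cball 0 s) (s *\<^sub>R x) \<partial>lborel)"
    using sp by (intro nn_integral_scale) auto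
  also have "(\<lambda>x. ennreal (g (s *\<^sub>R x)) * indicator (cball 0 s) (s *\<^sub>R x)) = (\<lambda>x. ennreal (s^d) * (ennreal (g x) * indicator (cball 0 1) x))"
  proof (rule ext)
    fix x :: 'a
    have "s *\<^sub>R x \<in> cball 0 s \<longleftrightarrow> x \<in> cball 0 1" using sp by (simp add: mult_le_cancel_left1)
    moreover have "ennreal (g (s *\<^sub>R x)) = ennreal (s^d) * ennreal (g x)" if "g x \<ge> 0"
      using sp that by (simp add: hom ennreal_mult)
    moreover have "ennreal (g (s *\<^sub>R x)) = 0" if "g x < 0"
    proof -
      have "s ^ d * g x \<le> 0" using sp that by (simp add: mult_nonneg_nonpos)
      then show ?thesis using sp by (simp add: hom ennreal_eq_0_iff)
    qed
    ultimately show "ennreal (g (s *\<^sub>R x)) * indicator (cball 0 s) (s *\<^sub>R x) = ennreal (s^d) * (ennreal (g x) * indicator (cball 0 1) x)"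
      by (cases "g x \<ge> 0") (auto simp: indicator_def ennreal_neg)
  qed
  also have "ennreal (\<bar>s\<bar>^DIM('a)) * (\<integral>\<^sup>+x. ennreal (s^d) * (ennreal (g x) * indicator (cball 0 1) x) \<partial>lborel)
     = ennreal (s ^ (DIM('a) + d)) * (\<integral>\<^sup>+x. ennreal (g x) * indicator (cball 0 1) x \<partial>lborel)"
  proof -
    have "(\<integral>\<^sup>+x. ennreal (s^d) * (ennreal (g x) * indicator (cball 0 1) x) \<partial>lborel) = ennreal (s^d) * (\<integral>\<^sup>+x. ennreal (g x) * indicator (cball 0 1) x \<partial>lborel)"
      by (rule nn_integral_cmult) measurable
    then show ?thesis using sp by (simp add: mult.assoc[symmetric] ennreal_mult[symmetric] power_add)
  qed
  finally show ?thesis .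
qed

definition K :: "nat \<Rightarrow> real" where "K m = (\<integral>x. indicator {0..} x *\<^sub>R (exp (- x\<^sup>2) * x ^ m) \<partial>lborel)"

lemma K_bochner: "has_bochner_integral lborel (\<lambda>x. indicator {0..} x *\<^sub>R (exp (- x\<^sup>2) * x ^ m)) (K m)"
proof (cases "even m")
  case True
  then obtain j where m: "m = 2*j" by (auto elim: evenE)
  show ?thesis unfolding K_def m using gaussian_moment_even_pos[of j]
    by (simp add: has_bochner_integral_iff)
next
  case False
  then obtain j where m: "m = 2*j+1" by (auto elim: oddE)
  show ?thesis unfolding K_def m using gaussian_moment_odd_pos[of j]
    by (simp add: has_bochner_integral_iff)
qed

lemma K_closed: "K (2*j) = (sqrt pi / 2) * (fact (2 * j) / (2 ^ (2 * j) * fact j))" "K (2*j+1) = fact j / 2"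
  using has_bochner_integral_integral_eq[OF gaussian_moment_even_pos[of j]]
    has_bochner_integral_integral_eq[OF gaussian_moment_odd_pos[of j]] by (simp_all add: K_def)

lemma K_rec: "K (m+2) = (real m + 1) / 2 * K m"
proof (cases "even m")
  case True
  then obtain j where m: "m = 2*j" by (auto elim: evenE)
  have e: "m + 2 = 2 * (j+1)" using m by simp
  show ?thesis unfolding e unfolding m K_closed
    by (simp add: field_simps fact_Suc power_add del: of_nat_Suc) (simp add: algebra_simps)
next
  case False
  then obtain j where m: "m = 2*j+1" by (auto elim: oddE)
  have e: "m + 2 = 2 * (j+1) + 1" using m by simp
  show ?thesis unfolding e unfolding m K_closed
    by (simp add: field_simps)
qed

lemma K_pos: "K m > 0"
proof (cases "even m")
  case True
  then obtain j where m: "m = 2*j" by (auto elim: evenE)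
  show ?thesis unfolding m K_closed by simp
next
  case False
  then obtain j where m: "m = 2*j+1" by (auto elim: oddE)
  show ?thesis unfolding m K_closed by simp
qed

lemma K_nn: "(\<integral>\<^sup>+x. ennreal (exp (- x\<^sup>2) * x ^ m) * indicator {0..} x \<partial>lborel) = ennreal (K m)"
proof -
  have "(\<integral>\<^sup>+x. ennreal (exp (- x\<^sup>2) * x ^ m) * indicator {0..} x \<partial>lborel)
     = (\<integral>\<^sup>+x. ennreal (indicator {0..} x *\<^sub>R (exp (- x\<^sup>2) * x ^ m)) \<partial>lborel)"
    by (intro nn_integral_cong) (auto simp: indicator_def)
  also have "\<dots> = ennreal (K m)"
    using K_bochner[of m] unfolding K_def
    by (intro nn_integral_eq_integral) (auto simp: indicator_def has_bochner_integral_iff)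
  finally show ?thesis .
qed



lemma pred_cball[measurable]: "Measurable.pred borel (\<lambda>x. x \<in> cball (c::'a::euclidean_space) r)"
  unfolding mem_cball by measurable

lemma exp_layer:
  assumes a: "a \<ge> 0"
  shows "ennreal (exp (- a\<^sup>2)) = (\<integral>\<^sup>+s. ennreal (2 * s * exp (- s\<^sup>2)) * indicator {a..} s \<partial>lborel)"
proof -
  have "(\<integral>\<^sup>+s. ennreal (2 * s * exp (- s\<^sup>2)) * indicator {a..} s \<partial>lborel) = ennreal (0 - (- exp (- a\<^sup>2)))"
  proof (rule nn_integral_FTC_atLeast)
    have "((\<lambda>x::real. - exp (- x\<^sup>2)) \<longlongrightarrow> - 0) at_top"
      by (intro tendsto_minus filterlim_compose[OF exp_at_bot]
                   filterlim_compose[OF filterlim_uminus_at_bot_at_top]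
                   filterlim_pow_at_top filterlim_ident) auto
    then show "((\<lambda>x::real. - exp (- x\<^sup>2)) \<longlongrightarrow> 0) at_top" by simp
  qed (use a in \<open>auto intro!: derivative_eq_intros\<close>)
  then show ?thesis by simp
qed

lemma gauss_radial:
  fixes g :: "'a::euclidean_space \<Rightarrow> real"
  assumes [measurable]: "g \<in> borel_measurable borel"
    and hom: "\<And>s x. s > 0 \<Longrightarrow> g (s *\<^sub>R x) = s ^ d * g x"
  shows "(\<integral>\<^sup>+x. ennreal (g x) * ennreal (exp (- (norm x)\<^sup>2)) \<partial>lborel)
    = (\<integral>\<^sup>+x. ennreal (g x) * indicator (cball 0 1) x \<partial>lborel) * ennreal (2 * K (DIM('a) + d + 1))"
proof -
  define C where "C = (\<integral>\<^sup>+x. ennreal (g x) * indicator (cball 0 1) x \<partial>lborel)"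
  have [measurable]: "Measurable.pred (borel \<Otimes>\<^sub>M borel) (\<lambda>x::'a\<times>real. snd x \<in> {norm (fst x)..})"
    unfolding atLeast_iff by measurable
  have "(\<integral>\<^sup>+x. ennreal (g x) * ennreal (exp (- (norm x)\<^sup>2)) \<partial>lborel)
     = (\<integral>\<^sup>+x. (\<integral>\<^sup>+s. ennreal (g x) * (ennreal (2 * s * exp (- s\<^sup>2)) * indicator {norm x..} s) \<partial>lborel) \<partial>lborel)"
    by (intro nn_integral_cong) (simp add: exp_layer nn_integral_cmult)
  also have "\<dots> = (\<integral>\<^sup>+s. (\<integral>\<^sup>+x. ennreal (g x) * (ennreal (2 * s * exp (- s\<^sup>2)) * indicator {norm x..} s) \<partial>lborel) \<partial>lborel)"
    by (rule lborel_pair.Fubini'[symmetric]) measurable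
  also have "\<dots> = (\<integral>\<^sup>+s. ennreal (2 * s * exp (- s\<^sup>2)) * (\<integral>\<^sup>+x. ennreal (g x) * indicator (cball 0 s) x \<partial>lborel) \<partial>lborel)"
  proof (intro nn_integral_cong)
    fix s :: real
    have "(\<integral>\<^sup>+x. ennreal (g x) * (ennreal (2 * s * exp (- s\<^sup>2)) * indicator {norm x..} s) \<partial>lborel)
       = (\<integral>\<^sup>+x. ennreal (2 * s * exp (- s\<^sup>2)) * (ennreal (g x) * indicator (cball 0 s) x) \<partial>lborel)"
      by (intro nn_integral_cong) (auto simp: indicator_def mult.commute)
    also have "\<dots> = ennreal (2 * s * exp (- s\<^sup>2)) * (\<integral>\<^sup>+x. ennreal (g x) * indicator (cball 0 s) x \<partial>lborel)"
      by (rule nn_integral_cmult) measurable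
    finally show "(\<integral>\<^sup>+x. ennreal (g x) * (ennreal (2 * s * exp (- s\<^sup>2)) * indicator {norm x..} s) \<partial>lborel)
       = ennreal (2 * s * exp (- s\<^sup>2)) * (\<integral>\<^sup>+x. ennreal (g x) * indicator (cball 0 s) x \<partial>lborel)" .
  qed
  also have "\<dots> = (\<integral>\<^sup>+s. C * (ennreal (2 * (exp (- s\<^sup>2) * s ^ (DIM('a) + d + 1))) * indicator {0..} s) \<partial>lborel)"
  proof (intro nn_integral_cong)
    fix s :: real
    show "ennreal (2 * s * exp (- s\<^sup>2)) * (\<integral>\<^sup>+x. ennreal (g x) * indicator (cball 0 s) x \<partial>lborel)
      = C * (ennreal (2 * (exp (- s\<^sup>2) * s ^ (DIM('a) + d + 1))) * indicator {0..} s)"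
    proof (cases "s \<ge> 0")
      case True
      have e1: "ennreal (2 * (exp (- s\<^sup>2) * s ^ (DIM('a) + d + 1))) = ennreal (s ^ (DIM('a) + d)) * ennreal (2 * s * exp (- s\<^sup>2))"
        using True by (subst ennreal_mult[symmetric]) (auto simp: mult_ac)
      show ?thesis
        unfolding e1 using True by (simp add: hom_cball[OF _ hom True] C_def mult_ac)
    next
      case False
      then have "2 * s * exp (- s\<^sup>2) \<le> 0" by (simp add: mult_nonpos_nonneg)
      then show ?thesis using False by (simp add: ennreal_neg)
    qed
  qed
  also have "\<dots> = C * (\<integral>\<^sup>+s. ennreal 2 * (ennreal (exp (- s\<^sup>2) * s ^ (DIM('a) + d + 1)) * indicator {0..} s) \<partial>lborel)"
  proof -
    have pw: "\<And>s. ennreal (2 * (exp (- s\<^sup>2) * s ^ (DIM('a) + d + 1))) * indicator {0..} s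
       = ennreal 2 * (ennreal (exp (- s\<^sup>2) * s ^ (DIM('a) + d + 1)) * indicator {0..} s)"
      by (subst ennreal_mult') (auto simp: mult.assoc)
    show ?thesis unfolding pw by (rule nn_integral_cmult) measurable
  qed
  also have "\<dots> = C * (ennreal 2 * ennreal (K (DIM('a) + d + 1)))"
    apply (subst nn_integral_cmult)
     apply measurable
    apply (subst K_nn)
    apply (rule refl)
    done
  finally show ?thesis by (simp add: C_def ennreal_mult')
qed



definition pk :: "'a::euclidean_space \<Rightarrow> nat \<Rightarrow> 'a \<Rightarrow> real" where
  "pk t k x = (t \<bullet> x) ^ (2*k)"
definition qk :: "'a::euclidean_space \<Rightarrow> nat \<Rightarrow> 'a \<Rightarrow> real" where
  "qk t k x = (t \<bullet> (x /\<^sub>R norm x)) ^ (2*k)"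

lemma pk_meas[measurable]: "pk t k \<in> borel_measurable borel"
  unfolding pk_def[abs_def] by measurable
lemma qk_meas[measurable]: "qk t k \<in> borel_measurable borel"
  unfolding qk_def[abs_def] by measurable
lemma pk_nn: "pk t k x \<ge> 0" by (simp add: pk_def power_mult)
lemma qk_nn: "qk t k x \<ge> 0" by (simp add: qk_def power_mult)
lemma pk_hom: "s > 0 \<Longrightarrow> pk t k (s *\<^sub>R x) = s ^ (2*k) * pk t k x"
  by (simp add: pk_def power_mult_distrib)
lemma qk_hom: "s > 0 \<Longrightarrow> qk t k (s *\<^sub>R x) = s ^ 0 * qk t k x"
  by (cases "x = 0") (simp_all add: qk_def field_simps)
lemma pk_qk: "pk t k x = (norm x) ^ (2*k) * qk t k x"
proof (cases "x = 0")
  case True then show ?thesis by (cases k) (auto simp: pk_def qk_def)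
next
  case False
  then have "t \<bullet> (x /\<^sub>R norm x) = (t \<bullet> x) / norm x" by (simp add: divide_inverse)
  then show ?thesis using False by (simp add: pk_def qk_def power_divide)
qed
lemma qk_le: "qk t k x \<le> (norm t) ^ (2*k)"
proof -
  have "\<bar>t \<bullet> (x /\<^sub>R norm x)\<bar> \<le> norm t * norm (x /\<^sub>R norm x)" by (rule Cauchy_Schwarz_ineq2)
  also have "norm (x /\<^sub>R norm x) \<le> 1" by (cases "x = 0") auto
  then have "norm t * norm (x /\<^sub>R norm x) \<le> norm t" by (simp add: mult_left_le)
  finally have "\<bar>t \<bullet> (x /\<^sub>R norm x)\<bar> \<le> norm t" .
  then have "\<bar>t \<bullet> (x /\<^sub>R norm x)\<bar> ^ (2*k) \<le> norm t ^ (2*k)" by (intro power_mono) auto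
  then show ?thesis by (simp add: qk_def power_even_abs)
qed

lemma ball_moment:
  fixes t :: "'a::euclidean_space"
  shows "(\<integral>\<^sup>+x. ennreal (pk t k x) * indicator (cball 0 1) x \<partial>lborel)
   = (\<integral>\<^sup>+x. ennreal (qk t k x) * indicator (cball 0 1) x \<partial>lborel) * ennreal (DIM('a) / (DIM('a) + 2*k))"
  (is "?F = ?H * _")
proof -
  define N where "N = DIM('a)"
  have [measurable]: "Measurable.pred (borel \<Otimes>\<^sub>M borel) (\<lambda>x::'a\<times>real. snd x \<in> {norm (fst x)..1})"
    unfolding atLeastAtMost_iff by measurable
  have Npos: "N > 0" by (simp add: N_def DIM_positive)
  define w where "w u = 2 * real k * u ^ (2*k-1)" for u :: real
  have w_nn: "u \<ge> 0 \<Longrightarrow> w u \<ge> 0" for u by (simp add: w_def)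
  have w_meas[measurable]: "w \<in> borel_measurable borel" unfolding w_def[abs_def] by measurable
  have layer: "ennreal (1 - norm x ^ (2*k)) = (\<integral>\<^sup>+u. ennreal (w u) * indicator {norm x..1} u \<partial>lborel)"
    if "norm x \<le> 1" for x :: 'a
  proof -
    have "(\<integral>\<^sup>+u. ennreal (w u) * indicator {norm x..1} u \<partial>lborel) = ennreal (1 ^ (2*k) - norm x ^ (2*k))"
    proof (rule nn_FTC_Icc)
      fix u assume "u \<in> {norm x..1}"
      show "((\<lambda>u. u ^ (2*k)) has_real_derivative w u) (at u)"
        unfolding w_def using DERIV_pow[of "2*k" u] by simp
    next
      fix u assume "u \<in> {norm x..1}"
      then show "0 \<le> w u" using w_nn[of u] norm_ge_zero[of x] by simp
    qed (use that in simp)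
    then show ?thesis by simp
  qed
  have H_fin: "?H < \<infinity>"
  proof -
    have "?H \<le> (\<integral>\<^sup>+x. ennreal (norm t ^ (2*k)) * indicator (cball (0::'a) 1) x \<partial>lborel)"
      by (intro nn_integral_mono mult_right_mono ennreal_leI qk_le) auto
    also have "\<dots> = ennreal (norm t ^ (2*k)) * emeasure lborel (cball (0::'a) 1)"
      by (rule nn_integral_cmult_indicator) simp
    also have "\<dots> < \<infinity>" using emeasure_lborel_cball_finite[of "0::'a" 1]
      by (simp add: ennreal_mult_less_top)
    finally show ?thesis .
  qed
  have "?H = (\<integral>\<^sup>+x. ennreal (pk t k x) * indicator (cball 0 1) x +
       (\<integral>\<^sup>+u. ennreal (qk t k x) * indicator (cball 0 1) x * (ennreal (w u) * indicator {norm x..1} u) \<partial>lborel) \<partial>lborel)"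
  proof (intro nn_integral_cong)
    fix x :: 'a
    show "ennreal (qk t k x) * indicator (cball 0 1) x = ennreal (pk t k x) * indicator (cball 0 1) x +
       (\<integral>\<^sup>+u. ennreal (qk t k x) * indicator (cball 0 1) x * (ennreal (w u) * indicator {norm x..1} u) \<partial>lborel)"
    proof (cases "norm x \<le> 1")
      case True
      have "(\<integral>\<^sup>+u. ennreal (qk t k x) * indicator (cball 0 1) x * (ennreal (w u) * indicator {norm x..1} u) \<partial>lborel)
         = ennreal (qk t k x) * ennreal (1 - norm x ^ (2*k))"
      proof -
        have "x \<in> cball 0 1" using True by simp
        then have "(\<integral>\<^sup>+u. ennreal (qk t k x) * indicator (cball 0 1) x * (ennreal (w u) * indicator {norm x..1} u) \<partial>lborel)
           = (\<integral>\<^sup>+u. ennreal (qk t k x) * (ennreal (w u) * indicator {norm x..1} u) \<partial>lborel)"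
          by simp
        also have "\<dots> = ennreal (qk t k x) * (\<integral>\<^sup>+u. ennreal (w u) * indicator {norm x..1} u \<partial>lborel)"
          by (rule nn_integral_cmult) simp
        finally show ?thesis using True by (simp add: layer)
      qed
      also have "\<dots> = ennreal (qk t k x * (1 - norm x ^ (2*k)))"
        using True qk_nn[of t k x] by (subst ennreal_mult) (auto intro: power_le_one)
      finally have e: "(\<integral>\<^sup>+u. ennreal (qk t k x) * indicator (cball 0 1) x * (ennreal (w u) * indicator {norm x..1} u) \<partial>lborel)
         = ennreal (qk t k x * (1 - norm x ^ (2*k)))" .
      have qq: "ennreal (qk t k x) = ennreal (pk t k x) + ennreal (qk t k x * (1 - norm x ^ (2*k)))"
      proof -
        have nx: "norm x ^ (2*k) \<le> 1" using True by (simp add: power_le_one)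
        have "0 \<le> qk t k x * (1 - norm x ^ (2*k))" using nx qk_nn[of t k x] by simp
        moreover have "qk t k x = pk t k x + qk t k x * (1 - norm x ^ (2*k))"
          by (simp add: pk_qk algebra_simps)
        ultimately show ?thesis using pk_nn[of t k x] by (metis ennreal_plus)
      qed
      have ind: "indicator (cball 0 1) x = (1::ennreal)" using True by simp
      show ?thesis unfolding e unfolding ind mult_1_right by (rule qq)
    next
      case False
      then show ?thesis by (simp add: indicator_def)
    qed
  qed
  also have "\<dots> = ?F + (\<integral>\<^sup>+x. \<integral>\<^sup>+u. ennreal (qk t k x) * indicator (cball 0 1) x * (ennreal (w u) * indicator {norm x..1} u) \<partial>lborel \<partial>lborel)"
    by (rule nn_integral_add) measurable
  also have "(\<integral>\<^sup>+x. \<integral>\<^sup>+u. ennreal (qk t k x) * indicator (cball 0 1) x * (ennreal (w u) * indicator {norm x..1} u) \<partial>lborel \<partial>lborel)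
     = (\<integral>\<^sup>+u. \<integral>\<^sup>+x. ennreal (qk t k x) * indicator (cball 0 1) x * (ennreal (w u) * indicator {norm x..1} u) \<partial>lborel \<partial>lborel)"
  proof -
    show ?thesis by (rule lborel_pair.Fubini'[symmetric]) measurable
  qed
  also have "\<dots> = (\<integral>\<^sup>+u. ?H * (ennreal (w u * u ^ N) * indicator {0..1} u) \<partial>lborel)"
  proof (intro nn_integral_cong)
    fix u :: real
    show "(\<integral>\<^sup>+x. ennreal (qk t k x) * indicator (cball 0 1) x * (ennreal (w u) * indicator {norm x..1} u) \<partial>lborel)
       = ?H * (ennreal (w u * u ^ N) * indicator {0..1} u)"
    proof (cases "0 \<le> u \<and> u \<le> 1")
      case True
      have "(\<integral>\<^sup>+x. ennreal (qk t k x) * indicator (cball 0 1) x * (ennreal (w u) * indicator {norm x..1} u) \<partial>lborel)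
         = (\<integral>\<^sup>+x. ennreal (w u) * (ennreal (qk t k x) * indicator (cball 0 u) x) \<partial>lborel)"
        using True by (intro nn_integral_cong) (auto simp: indicator_def mult.commute)
      also have "\<dots> = ennreal (w u) * (\<integral>\<^sup>+x. ennreal (qk t k x) * indicator (cball 0 u) x \<partial>lborel)"
        by (rule nn_integral_cmult) measurable
      also have "\<dots> = ennreal (w u) * (ennreal (u ^ (N + 0)) * ?H)"
        using True unfolding N_def by (subst hom_cball[OF _ qk_hom]) auto
      finally show ?thesis using True w_nn[of u]
        by (simp add: ennreal_mult mult_ac)
    next
      case False
      have "(\<integral>\<^sup>+x. ennreal (qk t k x) * indicator (cball 0 1) x * (ennreal (w u) * indicator {norm x..1} u) \<partial>lborel)
         = (\<integral>\<^sup>+(x::'a). 0 \<partial>lborel)"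
      proof (intro nn_integral_cong)
        fix x :: 'a
        show "ennreal (qk t k x) * indicator (cball 0 1) x * (ennreal (w u) * indicator {norm x..1} u) = 0"
        proof (cases "norm x \<le> u")
          case True
          then have "u \<ge> 0" using norm_ge_zero[of x] by linarith
          then have "\<not> u \<le> 1" using False by simp
          then show ?thesis by (simp add: indicator_def)
        next
          case False
          then show ?thesis by (simp add: indicator_def)
        qed
      qed
      then show ?thesis using False by (simp add: indicator_def)
    qed
  qed
  also have "\<dots> = ?H * (\<integral>\<^sup>+u. ennreal (w u * u ^ N) * indicator {0..1} u \<partial>lborel)"
    by (rule nn_integral_cmult) measurable
  also have "(\<integral>\<^sup>+u. ennreal (w u * u ^ N) * indicator {0..1} u \<partial>lborel) = ennreal (2*k / (2*k + N) * 1 ^ (2*k + N) - 2*k / (2*k + N) * 0 ^ (2*k+N))"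
  proof (rule nn_FTC_Icc)
    fix u :: real assume u: "u \<in> {0..1}"
    have "w u * u ^ N = 2*k / (2*k + N) * (real (2*k+N) * u ^ (2*k+N-1))"
    proof (cases k)
      case 0 then show ?thesis by (simp add: w_def)
    next
      case (Suc j)
      have "u ^ (2*k-1) * u ^ N = u ^ (2*k+N-1)" unfolding power_add[symmetric] using Suc by simp
      then show ?thesis using Npos by (simp add: w_def field_simps)
    qed
    then show "((\<lambda>u. 2*k / (2*k + N) * u ^ (2*k+N)) has_real_derivative w u * u ^ N) (at u)"
      by (auto intro!: derivative_eq_intros)
  next
    fix u :: real assume "u \<in> {0..1}"
    then show "0 \<le> w u * u ^ N" using w_nn[of u] by simp
  qed simp
  finally have eq: "?H = ?F + ?H * ennreal (2*k / (2*k + N))" using Npos by (simp add: power_0_left)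
  define c where "c = 2*k / (2*k + real N)"
  have c: "c \<ge> 0" by (simp add: c_def)
  have eq': "?H = ?F + ?H * ennreal c" using eq by (simp add: c_def)
  define h where "h = enn2real ?H"
  have h: "?H = ennreal h" "h \<ge> 0" using H_fin by (simp_all add: h_def ennreal_enn2real)
  have FH: "?F \<le> ?H" by (rule le_iff_add[THEN iffD2], rule exI, rule eq')
  define f where "f = enn2real ?F"
  have f: "?F = ennreal f" "f \<ge> 0" using H_fin FH by (simp_all add: f_def ennreal_enn2real)
  have "ennreal h = ennreal f + ennreal h * ennreal c" using eq' h f by simp
  also have "\<dots> = ennreal (f + h * c)" using h f c by (simp add: ennreal_mult ennreal_plus)
  finally have "h = f + h * c" using h f c by (subst (asm) ennreal_inj) auto
  then have "f = h * (N / (N + 2*k))" using Npos by (simp add: c_def field_simps)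
  then have "?F = ennreal h * ennreal (N / (N + 2*k))"
    using h f by (simp add: ennreal_mult[symmetric] del: times_divide_eq_right)
  then show ?thesis using h by (simp add: N_def)
qed



definition mom :: "nat \<Rightarrow> 'a::euclidean_space \<Rightarrow> ennreal" where
  "mom k t = (\<integral>\<^sup>+x. ennreal (pk t k x) \<partial>uniform_sphere)"

lemma ubv_pos: "unit_ball_vol (real DIM('a::euclidean_space)) > 0"
  by (rule unit_ball_vol_pos) simp

lemma mom_ball:
  fixes t :: "'a::euclidean_space"
  shows "(\<integral>\<^sup>+x. ennreal (qk t k x) * indicator (cball 0 1) x \<partial>lborel) = mom k t * ennreal (unit_ball_vol DIM('a))"
proof -
  let ?V = "ennreal (unit_ball_vol DIM('a))"
  have v: "unit_ball_vol (real DIM('a)) > 0" by (rule ubv_pos)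
  have V1: "?V \<noteq> 0" using v by (metis ennreal_eq_0_iff not_le)
  have V2: "?V < top" by simp
  have "mom k t = (\<integral>\<^sup>+x. ennreal (qk t k x) * indicator (cball 0 1) x \<partial>lborel) / ?V"
    unfolding mom_def by (subst sphere_nn) (auto simp: pk_def qk_def)
  then have "mom k t * ?V = (\<integral>\<^sup>+x. ennreal (qk t k x) * indicator (cball 0 1) x \<partial>lborel) * (?V / ?V)"
    by (simp add: ennreal_divide_times)
  then show ?thesis using V1 V2 by simp
qed

lemma mom0: "mom 0 t = 1"
proof -
  interpret prob_space "uniform_sphere :: 'a measure" by (rule prob_space_uniform_sphere)
  show ?thesis by (simp add: mom_def pk_def emeasure_space_1)
qed

definition T :: "nat \<Rightarrow> nat \<Rightarrow> real" where
  "T n k = n / (n + 2*k) * K (n + 2*k + 1)"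

lemma T_poch: "n > 0 \<Longrightarrow> T n k = K (n+1) * pochhammer (n/2) k"
proof (induction k)
  case 0 then show ?case by (simp add: T_def)
next
  case (Suc k)
  have e: "n + 2 * Suc k + 1 = (n + 2*k + 1) + 2" by simp
  have "T n (Suc k) = n / (n + 2*k + 2) * ((real (n + 2*k + 1) + 1) / 2 * K (n + 2*k + 1))"
    unfolding T_def e K_rec by (simp add: algebra_simps)
  also have "\<dots> = (n/2 + k) * T n k" using Suc.prems unfolding T_def by (simp add: field_simps)
  finally show ?case using Suc by (simp add: pochhammer_Suc mult_ac)
qed

lemma G_formula:
  fixes t :: "'a::euclidean_space"
  shows "(\<integral>\<^sup>+x. ennreal (pk t k x) * ennreal (exp (- (norm x)\<^sup>2)) \<partial>lborel)
    = mom k t * ennreal (2 * unit_ball_vol DIM('a) * K (DIM('a) + 1) * pochhammer (DIM('a)/2) k)"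
proof -
  have "(\<integral>\<^sup>+x. ennreal (pk t k x) * ennreal (exp (- (norm x)\<^sup>2)) \<partial>lborel)
     = (\<integral>\<^sup>+x. ennreal (pk t k x) * indicator (cball 0 1) x \<partial>lborel) * ennreal (2 * K (DIM('a) + 2*k + 1))"
    by (rule gauss_radial) (auto intro: pk_hom)
  also have "\<dots> = mom k t * ennreal (unit_ball_vol DIM('a)) * ennreal (DIM('a) / (DIM('a) + 2*k)) * ennreal (2 * K (DIM('a) + 2*k + 1))"
    by (simp add: ball_moment mom_ball)
  also have "\<dots> = mom k t * ennreal (2 * unit_ball_vol DIM('a) * T DIM('a) k)"
    using ubv_pos[where 'a='a] K_pos[of "DIM('a) + 2*k + 1"]
    by (simp add: mult.assoc ennreal_mult[symmetric] T_def mult_ac)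
  also have "T DIM('a) k = K (DIM('a) + 1) * pochhammer (DIM('a)/2) k"
    by (rule T_poch) (simp add: DIM_positive)
  finally show ?thesis by (simp add: mult_ac)
qed

lemma const_eq: "2 * unit_ball_vol DIM('a::euclidean_space) * K (DIM('a) + 1) = sqrt pi ^ DIM('a)"
proof -
  have "(\<integral>\<^sup>+(x::'a). ennreal (exp (0 \<bullet> x - 1 * (norm x)\<^sup>2)) \<partial>lborel) = ennreal (sqrt (pi / 1) ^ DIM('a) * exp ((norm (0::'a))\<^sup>2 / (4 * 1)))"
    by (rule gaussN) simp
  moreover have "(\<integral>\<^sup>+(x::'a). ennreal (exp (0 \<bullet> x - 1 * (norm x)\<^sup>2)) \<partial>lborel) =
    (\<integral>\<^sup>+x. ennreal (pk (0::'a) 0 x) * ennreal (exp (- (norm x)\<^sup>2)) \<partial>lborel)"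
    by (simp add: pk_def)
  ultimately have "ennreal (2 * unit_ball_vol DIM('a) * K (DIM('a) + 1)) = ennreal (sqrt pi ^ DIM('a))"
    by (simp add: G_formula mom0)
  then show ?thesis using ubv_pos[where 'a='a] K_pos[of "DIM('a) + 1"]
    by (subst (asm) ennreal_inj) auto
qed

lemma G_formula':
  fixes t :: "'a::euclidean_space"
  shows "(\<integral>\<^sup>+x. ennreal (pk t k x) * ennreal (exp (- (norm x)\<^sup>2)) \<partial>lborel)
    = mom k t * ennreal (sqrt pi ^ DIM('a) * pochhammer (DIM('a)/2) k)"
  using G_formula[of t k] const_eq[where 'a='a] by simp



lemma cosh_real_eq: "cosh (y::real) = (exp y + exp (- y)) / 2"
  by (simp add: cosh_def)

lemma ennreal_half_sum: "a \<ge> 0 \<Longrightarrow> b \<ge> 0 \<Longrightarrow> ennreal ((a + b) / 2) = inverse 2 * (ennreal a + ennreal b)"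
  by (subst divide_ennreal[symmetric]) (auto simp: divide_ennreal_def mult.commute)

lemma cosh_gauss:
  fixes t :: "'a::euclidean_space"
  shows "(\<integral>\<^sup>+x. ennreal (cosh (t \<bullet> x)) * ennreal (exp (- (norm x)\<^sup>2)) \<partial>lborel)
    = ennreal (sqrt pi ^ DIM('a) * exp ((norm t)\<^sup>2 / 4))"
proof -
  have "(\<integral>\<^sup>+x. ennreal (cosh (t \<bullet> x)) * ennreal (exp (- (norm x)\<^sup>2)) \<partial>lborel)
    = (\<integral>\<^sup>+x. inverse 2 * (ennreal (exp (t \<bullet> x - 1 * (norm x)\<^sup>2)) + ennreal (exp ((-t) \<bullet> x - 1 * (norm x)\<^sup>2))) \<partial>lborel)"
  proof (intro nn_integral_cong)
    fix x :: 'a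
    have "cosh (t \<bullet> x) * exp (- (norm x)\<^sup>2) = (exp (t \<bullet> x - 1 * (norm x)\<^sup>2) + exp ((-t) \<bullet> x - 1 * (norm x)\<^sup>2)) / 2"
      by (simp add: cosh_real_eq field_simps exp_diff exp_minus)
    then show "ennreal (cosh (t \<bullet> x)) * ennreal (exp (- (norm x)\<^sup>2))
      = inverse 2 * (ennreal (exp (t \<bullet> x - 1 * (norm x)\<^sup>2)) + ennreal (exp ((-t) \<bullet> x - 1 * (norm x)\<^sup>2)))"
      by (simp only: ennreal_half_sum[symmetric] exp_ge_zero, simp add: ennreal_mult[symmetric])
  qed
  also have "\<dots> = inverse 2 * ((\<integral>\<^sup>+x. ennreal (exp (t \<bullet> x - 1 * (norm x)\<^sup>2)) \<partial>lborel) + (\<integral>\<^sup>+x. ennreal (exp ((-t) \<bullet> x - 1 * (norm x)\<^sup>2)) \<partial>lborel))"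
    by (simp add: nn_integral_cmult nn_integral_add)
  also have "\<dots> = inverse 2 * (ennreal (sqrt pi ^ DIM('a) * exp ((norm t)\<^sup>2 / 4)) + ennreal (sqrt pi ^ DIM('a) * exp ((norm t)\<^sup>2 / 4)))"
  proof -
    have g1: "(\<integral>\<^sup>+x. ennreal (exp (t \<bullet> x - 1 * (norm x)\<^sup>2)) \<partial>lborel) = ennreal (sqrt pi ^ DIM('a) * exp ((norm t)\<^sup>2 / 4))"
      using gaussN[of 1 t] by simp
    have g2: "(\<integral>\<^sup>+x. ennreal (exp ((-t) \<bullet> x - 1 * (norm x)\<^sup>2)) \<partial>lborel) = ennreal (sqrt pi ^ DIM('a) * exp ((norm t)\<^sup>2 / 4))"
      using gaussN[of 1 "-t"] by simp
    show ?thesis by (simp only: g1 g2)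
  qed
  also have "\<dots> = ennreal (sqrt pi ^ DIM('a) * exp ((norm t)\<^sup>2 / 4))"
    by (subst ennreal_half_sum[symmetric]) auto
  finally show ?thesis .
qed

lemma pk_meas2[measurable]: "(\<lambda>x. pk t k x) \<in> borel_measurable borel"
  by measurable

lemma cosh_series_gauss:
  fixes t :: "'a::euclidean_space"
  shows "(\<integral>\<^sup>+x. ennreal (cosh (t \<bullet> x)) * ennreal (exp (- (norm x)\<^sup>2)) \<partial>lborel)
    = (\<Sum>k. mom k t * ennreal (sqrt pi ^ DIM('a) * pochhammer (DIM('a)/2) k / fact (2*k)))"
proof -
  have "(\<integral>\<^sup>+x. ennreal (cosh (t \<bullet> x)) * ennreal (exp (- (norm x)\<^sup>2)) \<partial>lborel)
     = (\<integral>\<^sup>+x. (\<Sum>k. ennreal (1 / fact (2*k)) * (ennreal (pk t k x) * ennreal (exp (- (norm x)\<^sup>2)))) \<partial>lborel)"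
  proof (intro nn_integral_cong)
    fix x :: 'a
    have "ennreal (cosh (t \<bullet> x)) * ennreal (exp (- (norm x)\<^sup>2)) = (\<Sum>k. ennreal ((t \<bullet> x) ^ (2*k) / fact (2*k)) * ennreal (exp (- (norm x)\<^sup>2)))"
      by (simp add: ennreal_cosh_suminf)
    also have "\<dots> = (\<Sum>k. ennreal (1 / fact (2*k)) * (ennreal (pk t k x) * ennreal (exp (- (norm x)\<^sup>2))))"
      by (intro suminf_cong) (simp add: pk_def ennreal_mult'[symmetric] power_mult)
    finally show "ennreal (cosh (t \<bullet> x)) * ennreal (exp (- (norm x)\<^sup>2)) = (\<Sum>k. ennreal (1 / fact (2*k)) * (ennreal (pk t k x) * ennreal (exp (- (norm x)\<^sup>2))))" .
  qed
  also have "\<dots> = (\<Sum>k. (\<integral>\<^sup>+x. ennreal (1 / fact (2*k)) * (ennreal (pk t k x) * ennreal (exp (- (norm x)\<^sup>2))) \<partial>lborel))"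
    by (rule nn_integral_suminf) measurable
  also have "\<dots> = (\<Sum>k. mom k t * ennreal (sqrt pi ^ DIM('a) * pochhammer (DIM('a)/2) k / fact (2*k)))"
  proof (intro suminf_cong)
    fix k
    have "(\<integral>\<^sup>+x. ennreal (1 / fact (2*k)) * (ennreal (pk t k x) * ennreal (exp (- (norm x)\<^sup>2))) \<partial>lborel)
      = ennreal (1 / fact (2*k)) * (mom k t * ennreal (sqrt pi ^ DIM('a) * pochhammer (DIM('a)/2) k))"
      by (subst nn_integral_cmult) (measurable, simp add: G_formula')
    also have "\<dots> = mom k t * ennreal (sqrt pi ^ DIM('a) * pochhammer (DIM('a)/2) k / fact (2*k))"
      by (simp add: ennreal_mult'[symmetric] mult_ac pochhammer_pos)
    finally show "(\<integral>\<^sup>+x. ennreal (1 / fact (2*k)) * (ennreal (pk t k x) * ennreal (exp (- (norm x)\<^sup>2))) \<partial>lborel)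
      = mom k t * ennreal (sqrt pi ^ DIM('a) * pochhammer (DIM('a)/2) k / fact (2*k))" .
  qed
  finally show ?thesis .
qed

lemma mgf_identity:
  fixes t :: "'a::euclidean_space"
  shows "(\<Sum>k. mom k t * ennreal (pochhammer (DIM('a)/2) k / fact (2*k))) = ennreal (exp ((norm t)\<^sup>2 / 4))"
proof -
  define c where "c = sqrt pi ^ DIM('a)"
  have c: "c > 0" by (simp add: c_def)
  have "ennreal c * (\<Sum>k. mom k t * ennreal (pochhammer (DIM('a)/2) k / fact (2*k)))
      = (\<Sum>k. mom k t * ennreal (c * pochhammer (DIM('a)/2) k / fact (2*k)))"
  proof -
    have "ennreal c * (\<Sum>k. mom k t * ennreal (pochhammer (DIM('a)/2) k / fact (2*k)))
       = (\<Sum>k. ennreal c * (mom k t * ennreal (pochhammer (DIM('a)/2) k / fact (2*k))))"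
      by (rule ennreal_suminf_cmult[symmetric])
    also have "\<dots> = (\<Sum>k. mom k t * ennreal (c * pochhammer (DIM('a)/2) k / fact (2*k)))"
    proof (intro suminf_cong)
      fix k
      have "ennreal c * ennreal (pochhammer (DIM('a)/2) k / fact (2*k)) = ennreal (c * pochhammer (DIM('a)/2) k / fact (2*k))"
        using c pochhammer_pos[of "real DIM('a)/2" k] by (subst ennreal_mult[symmetric]) (auto simp: DIM_positive)
      then show "ennreal c * (mom k t * ennreal (pochhammer (DIM('a)/2) k / fact (2*k))) = mom k t * ennreal (c * pochhammer (DIM('a)/2) k / fact (2*k))"
        by (metis mult.left_commute)
    qed
    finally show ?thesis .
  qed
  also have "\<dots> = ennreal c * ennreal (exp ((norm t)\<^sup>2 / 4))"
    unfolding c_def using cosh_series_gauss[of t] cosh_gauss[of t] c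
    by (simp add: ennreal_mult[symmetric] c_def)
  finally show ?thesis using c by (simp add: ennreal_mult_cancel_left)
qed



definition phi :: "'a::euclidean_space \<Rightarrow> ennreal" where
  "phi s = (\<integral>\<^sup>+x. ennreal (exp (s \<bullet> x)) \<partial>uniform_sphere)"

lemma meas_sphere: "f \<in> borel_measurable borel \<Longrightarrow> f \<in> borel_measurable (uniform_sphere :: 'a::euclidean_space measure)"
  by (simp add: measurable_cong_sets[OF sets_uniform_sphere refl])

lemma phi_cosh: "phi s = (\<integral>\<^sup>+x. ennreal (cosh (s \<bullet> x)) \<partial>uniform_sphere)"
proof -
  have "(\<integral>\<^sup>+x. ennreal (cosh (s \<bullet> x)) \<partial>uniform_sphere)
      = (\<integral>\<^sup>+x. inverse 2 * (ennreal (exp (s \<bullet> x)) + ennreal (exp (s \<bullet> (-x)))) \<partial>uniform_sphere)"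
    by (intro nn_integral_cong) (simp add: cosh_real_eq ennreal_half_sum[symmetric])
  also have "\<dots> = inverse 2 * (phi s + (\<integral>\<^sup>+x. ennreal (exp (s \<bullet> (-x))) \<partial>uniform_sphere))"
    unfolding phi_def
    apply (subst nn_integral_cmult)
     apply (rule meas_sphere, measurable)
    apply (subst nn_integral_add)
      apply (rule meas_sphere, measurable)+
    done
  also have "(\<integral>\<^sup>+x. ennreal (exp (s \<bullet> (-x))) \<partial>uniform_sphere) = phi s"
    unfolding phi_def by (rule sphere_sym) measurable
  also have "inverse 2 * (phi s + phi s) = phi s"
  proof -
    have "(2::ennreal) / 2 = 1" by (rule ennreal_divide_self) auto
    then have i2: "inverse (2::ennreal) * 2 = 1" by (simp add: divide_ennreal_def mult.commute)
    show ?thesis by (simp add: mult_2[symmetric] mult.assoc[symmetric] i2 del: mult_2)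
  qed
  finally show ?thesis ..
qed

lemma phi_series: "phi s = (\<Sum>k. mom k s * ennreal (1 / fact (2*k)))"
proof -
  have "phi s = (\<integral>\<^sup>+x. (\<Sum>k. ennreal (1 / fact (2*k)) * ennreal (pk s k x)) \<partial>uniform_sphere)"
    unfolding phi_cosh
  proof (intro nn_integral_cong)
    fix x
    show "ennreal (cosh (s \<bullet> x)) = (\<Sum>k. ennreal (1 / fact (2*k)) * ennreal (pk s k x))"
      unfolding ennreal_cosh_suminf
      by (intro suminf_cong) (simp add: pk_def ennreal_mult'[symmetric] power_mult)
  qed
  also have "\<dots> = (\<Sum>k. \<integral>\<^sup>+x. ennreal (1 / fact (2*k)) * ennreal (pk s k x) \<partial>uniform_sphere)"
    by (rule nn_integral_suminf) (rule meas_sphere, measurable)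
  also have "\<dots> = (\<Sum>k. mom k s * ennreal (1 / fact (2*k)))"
    unfolding mom_def
    by (intro suminf_cong, subst nn_integral_cmult) (rule meas_sphere, measurable, simp add: mult.commute)
  finally show ?thesis .
qed

lemma mom_scale: "mom k (c *\<^sub>R s) = ennreal (c ^ (2*k)) * mom k s"
proof -
  have "mom k (c *\<^sub>R s) = (\<integral>\<^sup>+x. ennreal (c ^ (2*k)) * ennreal (pk s k x) \<partial>uniform_sphere)"
    unfolding mom_def
    by (intro nn_integral_cong) (simp add: pk_def ennreal_mult'[symmetric] power_mult power_mult_distrib)
  also have "\<dots> = ennreal (c ^ (2*k)) * mom k s"
    unfolding mom_def by (rule nn_integral_cmult) (rule meas_sphere, measurable)
  finally show ?thesis .
qed

lemma poch_ge: "(x::real) \<ge> 0 \<Longrightarrow> pochhammer x k \<ge> x ^ k"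
proof (induction k)
  case (Suc k)
  have "x ^ Suc k = x ^ k * x" by simp
  also have "\<dots> \<le> pochhammer x k * (x + real k)"
    using Suc by (intro mult_mono) (auto intro: order_trans[OF zero_le_power])
  finally show ?case by (simp add: pochhammer_Suc)
qed simp

lemma phi_upper:
  fixes s :: "'a::euclidean_space"
  shows "phi s \<le> ennreal (exp ((norm s)\<^sup>2 / (2 * DIM('a))))"
proof -
  define N where "N = real DIM('a)"
  have N: "N > 0" by (simp add: N_def DIM_positive)
  define a where "a = sqrt (2 / N)"
  have a2: "a\<^sup>2 = 2 / N" using N by (simp add: a_def)
  have "phi s = (\<Sum>k. mom k s * ennreal (1 / fact (2*k)))" by (rule phi_series)
  also have "\<dots> \<le> (\<Sum>k. mom k (a *\<^sub>R s) * ennreal (pochhammer (DIM('a)/2) k / fact (2*k)))"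
  proof (intro suminf_le summableI)
    fix k
    have p: "pochhammer (N/2) k \<ge> (N/2) ^ k" using N by (intro poch_ge) simp
    have "1 = (2/N) ^ k * (N/2) ^ k" using N by (simp add: power_mult_distrib[symmetric])
    also have "\<dots> \<le> (2/N) ^ k * pochhammer (N/2) k" using p N by (intro mult_left_mono) auto
    finally have le1: "1 \<le> a ^ (2*k) * pochhammer (N/2) k" by (simp add: power_mult a2)
    have "ennreal (1 / fact (2*k)) \<le> ennreal (a ^ (2*k) * pochhammer (N/2) k / fact (2*k))"
      using le1 by (intro ennreal_leI divide_right_mono) auto
    also have "\<dots> = ennreal (a ^ (2*k)) * ennreal (pochhammer (N/2) k / fact (2*k))"
      by (simp add: ennreal_mult'[symmetric] power_mult)
    finally have "mom k s * ennreal (1 / fact (2*k)) \<le> mom k s * (ennreal (a ^ (2*k)) * ennreal (pochhammer (N/2) k / fact (2*k)))"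
      by (rule mult_left_mono) simp
    then show "mom k s * ennreal (1 / fact (2*k)) \<le> mom k (a *\<^sub>R s) * ennreal (pochhammer (DIM('a)/2) k / fact (2*k))"
      by (simp add: mom_scale N_def mult_ac)
  qed
  also have "\<dots> = ennreal (exp ((norm (a *\<^sub>R s))\<^sup>2 / 4))" by (rule mgf_identity)
  also have "(norm (a *\<^sub>R s))\<^sup>2 / 4 = (norm s)\<^sup>2 / (2 * DIM('a))"
    using N by (simp add: power_mult_distrib a2 N_def)
  finally show ?thesis .
qed

lemma ennreal_sum_sums: "(\<And>k. 0 \<le> f k) \<Longrightarrow> 0 \<le> x \<Longrightarrow> (\<Sum>k. ennreal (f k)) = ennreal x \<Longrightarrow> f sums x"
  by (metis sums_ennreal summableI summable_sums)

lemma eps_le: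
  fixes A r B :: real
  assumes "\<And>e. 0 < e \<Longrightarrow> e \<le> 1 \<Longrightarrow> A \<le> r + e * B" "B \<ge> 0"
  shows "A \<le> r"
proof (rule ccontr)
  assume "\<not> A \<le> r"
  then have d: "A - r > 0" by simp
  define e where "e = min 1 ((A - r) / (2 * (B + 1)))"
  have e: "0 < e" "e \<le> 1" using d assms(2) by (auto simp: e_def)
  have "e * B \<le> (A - r) / (2 * (B + 1)) * B" using e assms(2) by (intro mult_right_mono) (auto simp: e_def)
  also have "\<dots> = (A - r) * (B / (2 * (B + 1)))" by simp
  also have "\<dots> < (A - r) * 1"
  proof (rule mult_strict_left_mono)
    show "B / (2 * (B + 1)) < 1" using assms(2) by (simp add: field_simps)
  qed (use d in simp)
  finally show False using assms(1)[OF e] by simp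
qed


lemma mom1_lower:
  fixes s :: "'a::euclidean_space"
  shows "mom 1 s \<ge> ennreal ((norm s)\<^sup>2 / DIM('a))"
proof -
  define N where "N = real DIM('a)"
  have N: "N > 0" by (simp add: N_def DIM_positive)
  define c where "c k = pochhammer (N/2) k / fact (2*k)" for k
  have c: "c k > 0" for k using N by (simp add: c_def pochhammer_pos)
  define A where "A = (norm s)\<^sup>2 / 4"
  have A: "A \<ge> 0" by (simp add: A_def)
  have id: "(\<Sum>k. mom k s * ennreal (c k)) = ennreal (exp A)"
    using mgf_identity[of s] by (simp add: c_def N_def A_def)
  have fin: "mom k s < top" for k
  proof (rule ccontr)
    assume "\<not> mom k s < top"
    then have "mom k s = top" by (metis less_top)
    then have "mom k s * ennreal (c k) = top" using c[of k] by (simp add: ennreal_mult_eq_top_iff)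
    moreover have "mom k s * ennreal (c k) \<le> (\<Sum>k. mom k s * ennreal (c k))"
      using sum_le_suminf[of "\<lambda>k. mom k s * ennreal (c k)" "{k}"] by simp
    ultimately show False using id by (simp add: top_unique)
  qed
  define \<mu> where "\<mu> k = enn2real (mom k s)" for k
  have mu: "mom k s = ennreal (\<mu> k)" "\<mu> k \<ge> 0" for k using fin[of k] by (simp_all add: \<mu>_def ennreal_enn2real)
  define r where "r k = \<mu> k * c k" for k
  have r: "r k \<ge> 0" for k using mu(2)[of k] c[of k] by (simp add: r_def)
  have sums: "(\<lambda>k. e ^ (2*k) * r k) sums exp (e\<^sup>2 * A)" if "e \<ge> 0" for e
  proof (rule ennreal_sum_sums)
    show "0 \<le> e ^ (2*k) * r k" for k using r[of k] that by simp
    have "(\<Sum>k. ennreal (e ^ (2*k) * r k)) = (\<Sum>k. mom k (e *\<^sub>R s) * ennreal (c k))"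
      by (intro suminf_cong) (simp add: mom_scale mu r_def ennreal_mult'[symmetric] power_mult mult_ac c[THEN less_imp_le])
    also have "\<dots> = ennreal (exp ((norm (e *\<^sub>R s))\<^sup>2 / 4))"
      using mgf_identity[of "e *\<^sub>R s"] by (simp add: c_def N_def)
    also have "(norm (e *\<^sub>R s))\<^sup>2 / 4 = e\<^sup>2 * A" by (simp add: A_def power_mult_distrib)
    finally show "(\<Sum>k. ennreal (e ^ (2*k) * r k)) = ennreal (exp (e\<^sup>2 * A))" .
  qed simp
  have r0: "r 0 = 1" using mom0[of s] mu[of 0] by (simp add: r_def c_def)
  have r1: "r 1 = \<mu> 1 * N / 4" by (simp add: r_def c_def)
  have key: "A \<le> r 1 + e * exp A" if e: "0 < e" "e \<le> 1" for e
  proof -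
    define \<epsilon> where "\<epsilon> = sqrt e"
    have eps: "\<epsilon> > 0" "\<epsilon> \<le> 1" "\<epsilon>\<^sup>2 = e" using e by (auto simp: \<epsilon>_def)
    define d where "d k = \<epsilon> ^ 4 * r k + (if k = 0 then r k else 0) + (if k = 1 then \<epsilon>\<^sup>2 * r k else 0)" for k
    have dsum: "d sums (\<epsilon> ^ 4 * exp A + r 0 + \<epsilon>\<^sup>2 * r 1)"
    proof -
      have "(\<lambda>k. \<epsilon> ^ 4 * r k) sums (\<epsilon> ^ 4 * exp A)"
        using sums[of 1] by (intro sums_mult) simp
      moreover have "(\<lambda>k. if k = 0 then r k else 0) sums r 0" by (rule sums_single)
      moreover have "(\<lambda>k. if k = 1 then \<epsilon>\<^sup>2 * r k else 0) sums (\<epsilon>\<^sup>2 * r 1)"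
        by (rule sums_single[of 1 "\<lambda>k. \<epsilon>\<^sup>2 * r k"])
      ultimately show ?thesis unfolding d_def by (intro sums_add)
    qed
    have h1: "exp (\<epsilon>\<^sup>2 * A) \<le> \<epsilon> ^ 4 * exp A + r 0 + \<epsilon>\<^sup>2 * r 1"
    proof (rule sums_le[OF _ sums[of \<epsilon>] dsum])
      fix k :: nat
      show "\<epsilon> ^ (2*k) * r k \<le> d k"
      proof (cases "k \<le> 1")
        case True
        then have "k = 0 \<or> k = 1" by auto
        then show ?thesis using r[of k] eps by (auto simp: d_def)
      next
        case False
        then have "\<epsilon> ^ (2*k) \<le> \<epsilon> ^ 4" using eps by (intro power_decreasing) auto
        then show ?thesis using False r[of k] unfolding d_def by (simp add: mult_right_mono)
      qed
    qed (use eps in simp)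
    have h2: "1 + \<epsilon>\<^sup>2 * A \<le> exp (\<epsilon>\<^sup>2 * A)" by (rule exp_ge_add_one_self)
    have h3: "\<epsilon>\<^sup>2 * (r 1 + \<epsilon>\<^sup>2 * exp A) = \<epsilon> ^ 4 * exp A + \<epsilon>\<^sup>2 * r 1"
      by (simp add: algebra_simps power2_eq_square power4_eq_xxxx)
    have "\<epsilon>\<^sup>2 * A \<le> \<epsilon>\<^sup>2 * (r 1 + \<epsilon>\<^sup>2 * exp A)"
      unfolding h3 using h1 h2 r0 by linarith
    then have "A \<le> r 1 + \<epsilon>\<^sup>2 * exp A" using eps \<open>0 < e\<close> by (simp add: mult_le_cancel_left_pos)
    then show ?thesis using eps by simp
  qed
  have "A \<le> r 1" by (rule eps_le[OF key]) auto
  then have "A \<le> \<mu> 1 * N / 4" unfolding r1 .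
  then have "(norm s)\<^sup>2 / N \<le> \<mu> 1" using N unfolding A_def by (simp add: field_simps)
  then show ?thesis using mu[of 1] by (simp add: N_def ennreal_leI)
qed

lemma phi_lower:
  fixes s :: "'a::euclidean_space"
  shows "phi s \<ge> ennreal (1 + (norm s)\<^sup>2 / (2 * DIM('a)))"
proof -
  have "(\<Sum>k\<in>{0,1}. mom k s * ennreal (1 / fact (2*k))) \<le> (\<Sum>k. mom k s * ennreal (1 / fact (2*k)))"
    by (rule sum_le_suminf) auto
  also have "\<dots> = phi s" by (rule phi_series[symmetric])
  finally have "1 + mom 1 s * ennreal (1/2) \<le> phi s" by (simp add: mom0)
  moreover have "ennreal ((norm s)\<^sup>2 / DIM('a)) * ennreal (1/2) \<le> mom 1 s * ennreal (1/2)"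
    by (intro mult_right_mono mom1_lower) auto
  moreover have "ennreal (1 + (norm s)\<^sup>2 / (2 * DIM('a))) = 1 + ennreal ((norm s)\<^sup>2 / DIM('a)) * ennreal (1/2)"
  proof -
    have "ennreal ((norm s)\<^sup>2 / DIM('a)) * ennreal (1/2) = ennreal ((norm s)\<^sup>2 / DIM('a) * (1/2))"
      by (rule ennreal_mult'[symmetric]) simp
    also have "(norm s)\<^sup>2 / DIM('a) * (1/2) = (norm s)\<^sup>2 / (2 * DIM('a))" by simp
    finally show ?thesis by (simp add: ennreal_plus)
  qed
  ultimately show ?thesis by (metis add_left_mono order_trans)
qed



lemma E_repr:
  fixes X :: "nat \<Rightarrow> 'm \<Rightarrow> 'a::euclidean_space" and M :: "'m measure"
  assumes M: "prob_space M" and ind: "prob_space.indep_vars M (\<lambda>_. borel) X UNIV"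
    and dist: "\<And>j. distr M borel (X j) = uniform_sphere" and c: "c > 0"
  shows "(\<integral>\<^sup>+\<omega>. ennreal (exp ((norm (\<Sum>j\<in>{1..n}. (1 / sqrt (real n)) *\<^sub>R X j \<omega>))\<^sup>2 / c\<^sup>2)) \<partial>M)
     = ennreal (1 / sqrt pi ^ DIM('a)) * (\<integral>\<^sup>+(x::'a). ennreal (exp (- (norm x)\<^sup>2)) * phi ((2 / (c * sqrt n)) *\<^sub>R x) ^ n \<partial>lborel)"
proof -
  interpret prob_space M by (rule M)
  have Xm[measurable]: "X j \<in> borel_measurable M" for j using ind by (auto simp: indep_vars_def)
  interpret P: pair_sigma_finite M "lborel :: 'a measure"
    by (simp add: pair_sigma_finite_def prob_space_imp_sigma_finite M lborel.sigma_finite_measure_axioms)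
  define S where "S \<omega> = (\<Sum>j\<in>{1..n}. (1 / sqrt (real n)) *\<^sub>R X j \<omega>)" for \<omega>
  have Sm[measurable]: "S \<in> borel_measurable M" unfolding S_def[abs_def] by measurable
  define K where "K = sqrt pi ^ DIM('a)"
  have K: "K > 0" by (simp add: K_def)
  define v where "v = 2 / (c * sqrt n)"
  have g: "ennreal (exp ((norm y)\<^sup>2 / c\<^sup>2)) = ennreal (1 / K) * (\<integral>\<^sup>+x. ennreal (exp (((2 / c) *\<^sub>R y) \<bullet> x - 1 * (norm x)\<^sup>2)) \<partial>lborel)" for y :: 'a
  proof -
    have "(\<integral>\<^sup>+x. ennreal (exp (((2 / c) *\<^sub>R y) \<bullet> x - 1 * (norm x)\<^sup>2)) \<partial>lborel) = ennreal (K * exp ((norm y)\<^sup>2 / c\<^sup>2))"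
      using gaussN[of 1 "(2/c) *\<^sub>R y"] c by (simp add: K_def power_mult_distrib power_divide)
    then show ?thesis using K by (simp add: ennreal_mult[symmetric])
  qed
  have "(\<integral>\<^sup>+\<omega>. ennreal (exp ((norm (S \<omega>))\<^sup>2 / c\<^sup>2)) \<partial>M)
     = (\<integral>\<^sup>+\<omega>. ennreal (1 / K) * (\<integral>\<^sup>+x. ennreal (exp (((2 / c) *\<^sub>R S \<omega>) \<bullet> x - 1 * (norm x)\<^sup>2)) \<partial>lborel) \<partial>M)"
    by (simp only: g)
  also have "\<dots> = ennreal (1 / K) * (\<integral>\<^sup>+\<omega>. (\<integral>\<^sup>+x. ennreal (exp (((2 / c) *\<^sub>R S \<omega>) \<bullet> x - 1 * (norm x)\<^sup>2)) \<partial>lborel) \<partial>M)"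
    by (rule nn_integral_cmult) measurable
  also have "(\<integral>\<^sup>+\<omega>. (\<integral>\<^sup>+x. ennreal (exp (((2 / c) *\<^sub>R S \<omega>) \<bullet> x - 1 * (norm x)\<^sup>2)) \<partial>lborel) \<partial>M)
     = (\<integral>\<^sup>+x. (\<integral>\<^sup>+\<omega>. ennreal (exp (((2 / c) *\<^sub>R S \<omega>) \<bullet> x - 1 * (norm x)\<^sup>2)) \<partial>M) \<partial>lborel)"
    by (rule P.Fubini'[symmetric]) measurable
  also have "\<dots> = (\<integral>\<^sup>+(x::'a). ennreal (exp (- (norm x)\<^sup>2)) * phi (v *\<^sub>R x) ^ n \<partial>lborel)"
  proof (intro nn_integral_cong)
    fix x :: 'a
    have indX: "indep_vars (\<lambda>_. borel) (\<lambda>j \<omega>. ennreal (exp ((v *\<^sub>R x) \<bullet> X j \<omega>))) {1..n}"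
      by (rule indep_vars_compose2[OF indep_vars_subset[OF ind]]) auto
    have "(\<integral>\<^sup>+\<omega>. ennreal (exp (((2 / c) *\<^sub>R S \<omega>) \<bullet> x - 1 * (norm x)\<^sup>2)) \<partial>M)
       = (\<integral>\<^sup>+\<omega>. ennreal (exp (- (norm x)\<^sup>2)) * (\<Prod>j\<in>{1..n}. ennreal (exp ((v *\<^sub>R x) \<bullet> X j \<omega>))) \<partial>M)"
    proof (intro nn_integral_cong)
      fix \<omega>
      have "((2 / c) *\<^sub>R S \<omega>) \<bullet> x = (\<Sum>j\<in>{1..n}. (v *\<^sub>R x) \<bullet> X j \<omega>)"
        unfolding S_def v_def by (simp add: inner_sum_right sum_distrib_left sum_divide_distrib inner_commute)
      then have "exp (((2 / c) *\<^sub>R S \<omega>) \<bullet> x - 1 * (norm x)\<^sup>2) = exp (- (norm x)\<^sup>2) * (\<Prod>j\<in>{1..n}. exp ((v *\<^sub>R x) \<bullet> X j \<omega>))"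
        by (simp add: exp_sum[symmetric] exp_add[symmetric])
      then show "ennreal (exp (((2 / c) *\<^sub>R S \<omega>) \<bullet> x - 1 * (norm x)\<^sup>2)) = ennreal (exp (- (norm x)\<^sup>2)) * (\<Prod>j\<in>{1..n}. ennreal (exp ((v *\<^sub>R x) \<bullet> X j \<omega>)))"
        by (simp add: prod_ennreal ennreal_mult prod_nonneg)
    qed
    also have "\<dots> = ennreal (exp (- (norm x)\<^sup>2)) * (\<integral>\<^sup>+\<omega>. (\<Prod>j\<in>{1..n}. ennreal (exp ((v *\<^sub>R x) \<bullet> X j \<omega>))) \<partial>M)"
      by (rule nn_integral_cmult) measurable
    also have "(\<integral>\<^sup>+\<omega>. (\<Prod>j\<in>{1..n}. ennreal (exp ((v *\<^sub>R x) \<bullet> X j \<omega>))) \<partial>M) = (\<Prod>j\<in>{1..n}. \<integral>\<^sup>+\<omega>. ennreal (exp ((v *\<^sub>R x) \<bullet> X j \<omega>)) \<partial>M)"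
      by (rule indep_vars_nn_integral[OF _ indX]) auto
    also have "\<dots> = (\<Prod>j\<in>{1..n}. phi (v *\<^sub>R x))"
    proof (intro prod.cong refl)
      fix j
      have "phi (v *\<^sub>R x) = (\<integral>\<^sup>+y. ennreal (exp ((v *\<^sub>R x) \<bullet> y)) \<partial>distr M borel (X j))"
        unfolding phi_def dist ..
      also have "\<dots> = (\<integral>\<^sup>+\<omega>. ennreal (exp ((v *\<^sub>R x) \<bullet> X j \<omega>)) \<partial>M)"
        by (rule nn_integral_distr) measurable
      finally show "(\<integral>\<^sup>+\<omega>. ennreal (exp ((v *\<^sub>R x) \<bullet> X j \<omega>)) \<partial>M) = phi (v *\<^sub>R x)" ..
    qed
    also have "\<dots> = phi (v *\<^sub>R x) ^ n" by simp
    finally show "(\<integral>\<^sup>+\<omega>. ennreal (exp (((2 / c) *\<^sub>R S \<omega>) \<bullet> x - 1 * (norm x)\<^sup>2)) \<partial>M) = ennreal (exp (- (norm x)\<^sup>2)) * phi (v *\<^sub>R x) ^ n" .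
  qed
  finally show ?thesis by (simp add: S_def K_def v_def)
qed



lemma sqrt_pow_powr: "(y::real) > 0 \<Longrightarrow> sqrt y ^ n = y powr (real n / 2)"
proof -
  assume y: "y > 0"
  have "sqrt y ^ n = (y powr (1/2)) powr (real n)"
    using y by (simp add: powr_half_sqrt powr_realpow)
  also have "\<dots> = y powr (real n / 2)" by (simp add: powr_powr)
  finally show ?thesis .
qed

lemma gauss_alpha:
  "(\<integral>\<^sup>+(x::'a::euclidean_space). ennreal (exp (- \<alpha> * (norm x)\<^sup>2)) \<partial>lborel)
     = (if \<alpha> > 0 then ennreal (sqrt (pi / \<alpha>) ^ DIM('a)) else \<infinity>)"
proof (cases "\<alpha> > 0")
  case True
  then show ?thesis using gaussN[OF True, of "0::'a"] by simp
next
  case False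
  have "(\<integral>\<^sup>+(x::'a). 1 \<partial>lborel) \<le> (\<integral>\<^sup>+(x::'a). ennreal (exp (- \<alpha> * (norm x)\<^sup>2)) \<partial>lborel)"
  proof (intro nn_integral_mono)
    fix x :: 'a
    have "0 \<le> - \<alpha> * (norm x)\<^sup>2" using False by (simp add: mult_nonpos_nonneg)
    then show "1 \<le> ennreal (exp (- \<alpha> * (norm x)\<^sup>2))" by simp
  qed
  then show ?thesis using False by (simp add: top_unique)
qed

definition alpha :: "nat \<Rightarrow> real \<Rightarrow> real" where "alpha N c = 1 - 2 / (N * c\<^sup>2)"
definition Bc :: "nat \<Rightarrow> real \<Rightarrow> ennreal" where
  "Bc N c = (if alpha N c > 0 then ennreal ((1 / alpha N c) powr (N / 2)) else \<infinity>)"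

lemma Bc_int:
  fixes c :: real
  assumes c: "c > 0"
  shows "ennreal (1 / sqrt pi ^ DIM('a)) * (\<integral>\<^sup>+(x::'a::euclidean_space). ennreal (exp (- (norm x)\<^sup>2) * exp (2 * (norm x)\<^sup>2 / (DIM('a) * c\<^sup>2))) \<partial>lborel)
    = Bc DIM('a) c"
proof -
  have "(\<integral>\<^sup>+(x::'a). ennreal (exp (- (norm x)\<^sup>2) * exp (2 * (norm x)\<^sup>2 / (DIM('a) * c\<^sup>2))) \<partial>lborel)
      = (\<integral>\<^sup>+(x::'a). ennreal (exp (- alpha DIM('a) c * (norm x)\<^sup>2)) \<partial>lborel)"
    by (intro nn_integral_cong) (simp add: alpha_def exp_add[symmetric] algebra_simps)
  also have "\<dots> = (if alpha DIM('a) c > 0 then ennreal (sqrt (pi / alpha DIM('a) c) ^ DIM('a)) else \<infinity>)"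
    by (rule gauss_alpha)
  finally have e: "(\<integral>\<^sup>+(x::'a). ennreal (exp (- (norm x)\<^sup>2) * exp (2 * (norm x)\<^sup>2 / (DIM('a) * c\<^sup>2))) \<partial>lborel)
      = (if alpha DIM('a) c > 0 then ennreal (sqrt (pi / alpha DIM('a) c) ^ DIM('a)) else \<infinity>)" .
  show ?thesis
  proof (cases "alpha DIM('a) c > 0")
    case True
    have "1 / sqrt pi ^ DIM('a) * sqrt (pi / alpha DIM('a) c) ^ DIM('a) = sqrt (1 / alpha DIM('a) c) ^ DIM('a)"
      by (simp add: power_divide[symmetric] real_sqrt_divide)
    also have "\<dots> = (1 / alpha DIM('a) c) powr (DIM('a) / 2)"
      using True by (simp add: sqrt_pow_powr)
    finally show ?thesis using True e by (simp add: Bc_def ennreal_mult[symmetric])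
  next
    case False
    then show ?thesis using e by (simp add: Bc_def ennreal_mult_top)
  qed
qed

definition En :: "'m measure \<Rightarrow> (nat \<Rightarrow> 'm \<Rightarrow> 'a::euclidean_space) \<Rightarrow> nat \<Rightarrow> real \<Rightarrow> ennreal" where
  "En M X n c = (\<integral>\<^sup>+\<omega>. ennreal (exp ((norm (\<Sum>j\<in>{1..n}. (1 / sqrt (real n)) *\<^sub>R X j \<omega>))\<^sup>2 / c\<^sup>2)) \<partial>M)"

lemma vx_norm:
  fixes c :: real and n :: nat
  assumes n: "n \<ge> 1" and c: "c > 0"
  shows "(norm ((2 / (c * sqrt n)) *\<^sub>R (x::'a::euclidean_space)))\<^sup>2 / (2 * DIM('a)) = (2 * (norm x)\<^sup>2 / (DIM('a) * c\<^sup>2)) / n"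
  using n c by (simp add: power_mult_distrib power_divide field_simps)

lemma E_upper:
  fixes X :: "nat \<Rightarrow> 'm \<Rightarrow> 'a::euclidean_space" and M :: "'m measure"
  assumes M: "prob_space M" and ind: "prob_space.indep_vars M (\<lambda>_. borel) X UNIV"
    and dist: "\<And>j. distr M borel (X j) = uniform_sphere" and c: "c > 0" and n: "n \<ge> 1"
    and al: "alpha DIM('a) c > 0"
  shows "En M X n c \<le> Bc DIM('a) c"
proof -
  have "En M X n c = ennreal (1 / sqrt pi ^ DIM('a)) * (\<integral>\<^sup>+(x::'a). ennreal (exp (- (norm x)\<^sup>2)) * phi ((2 / (c * sqrt n)) *\<^sub>R x) ^ n \<partial>lborel)"
    unfolding En_def by (rule E_repr[OF M ind dist c])
  also have "\<dots> \<le> ennreal (1 / sqrt pi ^ DIM('a)) * (\<integral>\<^sup>+(x::'a). ennreal (exp (- (norm x)\<^sup>2) * exp (2 * (norm x)\<^sup>2 / (DIM('a) * c\<^sup>2))) \<partial>lborel)"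
  proof (intro mult_left_mono nn_integral_mono)
    fix x :: 'a
    have "phi ((2 / (c * sqrt n)) *\<^sub>R x) ^ n \<le> ennreal (exp ((norm ((2 / (c * sqrt n)) *\<^sub>R x))\<^sup>2 / (2 * DIM('a)))) ^ n"
      by (intro power_mono phi_upper) simp
    also have "\<dots> = ennreal (exp ((2 * (norm x)\<^sup>2 / (DIM('a) * c\<^sup>2)) / n) ^ n)"
      by (subst vx_norm[OF n c], subst ennreal_power) auto
    also have "exp ((2 * (norm x)\<^sup>2 / (DIM('a) * c\<^sup>2)) / n) ^ n = exp (2 * (norm x)\<^sup>2 / (DIM('a) * c\<^sup>2))"
      using n by (simp add: exp_of_nat_mult[symmetric])
    finally have "phi ((2 / (c * sqrt n)) *\<^sub>R x) ^ n \<le> ennreal (exp (2 * (norm x)\<^sup>2 / (DIM('a) * c\<^sup>2)))" .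
    then show "ennreal (exp (- (norm x)\<^sup>2)) * phi ((2 / (c * sqrt n)) *\<^sub>R x) ^ n
      \<le> ennreal (exp (- (norm x)\<^sup>2) * exp (2 * (norm x)\<^sup>2 / (DIM('a) * c\<^sup>2)))"
      by (simp add: ennreal_mult mult_left_mono)
  qed simp
  also have "\<dots> = Bc DIM('a) c" by (rule Bc_int[OF c])
  finally show ?thesis .
qed

lemma phi_meas[measurable]: "phi \<in> borel_measurable (borel :: 'a::euclidean_space measure)"
proof -
  interpret prob_space "uniform_sphere :: 'a measure" by (rule prob_space_uniform_sphere)
  have "(\<lambda>(s::'a, x::'a). ennreal (exp (s \<bullet> x))) \<in> borel_measurable (borel \<Otimes>\<^sub>M borel)"
    by measurable
  then have "(\<lambda>(s::'a, x::'a). ennreal (exp (s \<bullet> x))) \<in> borel_measurable (borel \<Otimes>\<^sub>M uniform_sphere)"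
    by (subst measurable_cong_sets[OF sets_pair_measure_cong[OF refl sets_uniform_sphere] refl])
  then show ?thesis unfolding phi_def[abs_def] by (rule borel_measurable_nn_integral)
qed

lemma E_liminf:
  fixes X :: "nat \<Rightarrow> 'm \<Rightarrow> 'a::euclidean_space" and M :: "'m measure"
  assumes M: "prob_space M" and ind: "prob_space.indep_vars M (\<lambda>_. borel) X UNIV"
    and dist: "\<And>j. distr M borel (X j) = uniform_sphere" and c: "c > 0"
  shows "Bc DIM('a) c \<le> liminf (\<lambda>n. En M X n c)"
proof -
  define K where "K = 1 / sqrt pi ^ DIM('a)"
  have K: "K > 0" by (simp add: K_def)
  define a where "a x = 2 * (norm x)\<^sup>2 / (DIM('a) * c\<^sup>2)" for x :: 'a
  have a: "a x \<ge> 0" for x using c by (simp add: a_def)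
  define w where "w n x = ennreal (K * exp (- (norm x)\<^sup>2) * (1 + a x / n) ^ n)" for n :: nat and x :: 'a
  have wm[measurable]: "w n \<in> borel_measurable lborel" for n unfolding w_def[abs_def] a_def by measurable
  have lim: "liminf (\<lambda>n. w n x) = ennreal (K * exp (- (norm x)\<^sup>2) * exp (a x))" for x
    unfolding w_def
    by (intro lim_imp_Liminf tendsto_ennrealI tendsto_mult_left tendsto_exp_limit_sequentially) simp
  have "Bc DIM('a) c = (\<integral>\<^sup>+x. ennreal K * ennreal (exp (- (norm x)\<^sup>2) * exp (a x)) \<partial>lborel)"
    unfolding Bc_int[OF c, symmetric] K_def a_def by (rule nn_integral_cmult[symmetric]) measurable
  also have "\<dots> = (\<integral>\<^sup>+x. liminf (\<lambda>n. w n x) \<partial>lborel)"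
    using K by (intro nn_integral_cong) (simp add: lim ennreal_mult[symmetric] mult.assoc)
  also have "\<dots> \<le> liminf (\<lambda>n. integral\<^sup>N lborel (w n))"
    by (rule nn_integral_liminf) simp
  also have "\<dots> \<le> liminf (\<lambda>n. En M X n c)"
  proof (intro Liminf_mono eventually_sequentiallyI[of 1])
    fix n :: nat assume n: "n \<ge> 1"
    have "integral\<^sup>N lborel (w n) \<le> (\<integral>\<^sup>+(x::'a). ennreal K * (ennreal (exp (- (norm x)\<^sup>2)) * phi ((2 / (c * sqrt n)) *\<^sub>R x) ^ n) \<partial>lborel)"
    proof (intro nn_integral_mono)
      fix x :: 'a
      have "ennreal ((1 + a x / n) ^ n) = ennreal (1 + (norm ((2 / (c * sqrt n)) *\<^sub>R x))\<^sup>2 / (2 * DIM('a))) ^ n"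
        using a[of x] by (subst vx_norm[OF n c], subst ennreal_power) (auto simp: a_def)
      also have "\<dots> \<le> phi ((2 / (c * sqrt n)) *\<^sub>R x) ^ n"
        by (intro power_mono phi_lower) simp
      finally have "ennreal ((1 + a x / n) ^ n) \<le> phi ((2 / (c * sqrt n)) *\<^sub>R x) ^ n" .
      then show "w n x \<le> ennreal K * (ennreal (exp (- (norm x)\<^sup>2)) * phi ((2 / (c * sqrt n)) *\<^sub>R x) ^ n)"
        unfolding w_def using K a[of x]
        by (simp add: ennreal_mult mult.assoc mult_left_mono)
    qed
    also have "\<dots> = En M X n c"
      unfolding En_def E_repr[OF M ind dist c] K_def by (rule nn_integral_cmult) measurable
    finally show "integral\<^sup>N lborel (w n) \<le> En M X n c" .
  qed
  finally show ?thesis .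
qed



lemma Z_int:
  fixes Z :: "'b \<Rightarrow> 'a::euclidean_space" and c :: real
  assumes Z: "distributed M' lborel Z (\<lambda>x. ennreal (gauss_cov_inv_dim x))" and c: "c > 0"
  shows "(\<integral>\<^sup>+\<omega>. ennreal (exp ((norm (Z \<omega>))\<^sup>2 / c\<^sup>2)) \<partial>M') = Bc DIM('a) c"
proof -
  define N where "N = real DIM('a)"
  have N: "N > 0" by (simp add: N_def DIM_positive)
  define D where "D = (N / (2 * pi)) powr (N / 2)"
  have D: "D > 0" using N by (simp add: D_def)
  define \<beta> where "\<beta> = N / 2 - 1 / c\<^sup>2"
  have "(\<integral>\<^sup>+\<omega>. ennreal (exp ((norm (Z \<omega>))\<^sup>2 / c\<^sup>2)) \<partial>M')
      = (\<integral>\<^sup>+(x::'a). ennreal (gauss_cov_inv_dim x) * ennreal (exp ((norm x)\<^sup>2 / c\<^sup>2)) \<partial>lborel)"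
    by (rule distributed_nn_integral[OF Z, symmetric]) measurable
  also have "\<dots> = (\<integral>\<^sup>+(x::'a). ennreal D * ennreal (exp (- \<beta> * (norm x)\<^sup>2)) \<partial>lborel)"
  proof (intro nn_integral_cong)
    fix x :: 'a
    have "gauss_cov_inv_dim x * exp ((norm x)\<^sup>2 / c\<^sup>2) = D * exp (- \<beta> * (norm x)\<^sup>2)"
      unfolding gauss_cov_inv_dim_def D_def \<beta>_def N_def
      by (simp add: mult.assoc exp_add[symmetric] algebra_simps)
    then show "ennreal (gauss_cov_inv_dim x) * ennreal (exp ((norm x)\<^sup>2 / c\<^sup>2)) = ennreal D * ennreal (exp (- \<beta> * (norm x)\<^sup>2))"
      using D by (simp add: ennreal_mult[symmetric] gauss_cov_inv_dim_def)
  qed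
  also have "\<dots> = ennreal D * (if \<beta> > 0 then ennreal (sqrt (pi / \<beta>) ^ DIM('a)) else \<infinity>)"
    apply (subst nn_integral_cmult)
     apply measurable
    apply (subst gauss_alpha)
    apply (rule refl)
    done
  also have "\<dots> = Bc DIM('a) c"
  proof (cases "\<beta> > 0")
    case True
    have al: "alpha DIM('a) c = 2 * \<beta> / N" using N c by (simp add: alpha_def \<beta>_def N_def field_simps)
    then have alp: "alpha DIM('a) c > 0" using True N by simp
    have "D * sqrt (pi / \<beta>) ^ DIM('a) = D * (pi / \<beta>) powr (N / 2)"
      using True by (simp add: sqrt_pow_powr N_def)
    also have "\<dots> = (N / (2 * pi) * (pi / \<beta>)) powr (N / 2)"
      unfolding D_def by (rule powr_mult[symmetric])
    also have "N / (2 * pi) * (pi / \<beta>) = 1 / alpha DIM('a) c"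
      using True N unfolding al by (simp add: field_simps)
    finally show ?thesis using True alp D by (simp add: Bc_def ennreal_mult[symmetric] N_def)
  next
    case False
    have "alpha DIM('a) c \<le> 0"
    proof -
      have "N * c\<^sup>2 \<le> 2" using False c by (simp add: \<beta>_def field_simps)
      then have "1 \<le> 2 / (N * c\<^sup>2)" using N c by (simp add: field_simps)
      then show ?thesis by (simp add: alpha_def N_def)
    qed
    then show ?thesis using False D by (simp add: Bc_def ennreal_mult_top)
  qed
  finally show ?thesis .
qed

definition cZ :: "nat \<Rightarrow> real" where
  "cZ N = sqrt (2 / real N) * sqrt (1 / (1 - (1/2) powr (2 / real N)))"

lemma powr_le_iff_root:
  fixes x y a :: real assumes "x > 0" "y > 0" "a > 0"
  shows "x powr a \<le> y \<longleftrightarrow> x \<le> y powr (1 / a)"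
proof
  assume "x powr a \<le> y"
  then have "(x powr a) powr (1/a) \<le> y powr (1/a)" using assms by (intro powr_mono2) auto
  then show "x \<le> y powr (1/a)" using assms by (simp add: powr_powr)
next
  assume "x \<le> y powr (1/a)"
  then have "x powr a \<le> (y powr (1/a)) powr a" using assms by (intro powr_mono2) auto
  then show "x powr a \<le> y" using assms by (simp add: powr_powr)
qed

lemma Bc_le2:
  fixes c :: real
  assumes N: "N \<ge> 1" and c: "c > 0"
  shows "Bc N c \<le> 2 \<longleftrightarrow> cZ N \<le> c"
proof -
  define q where "q = (1/2::real) powr (2 / real N)"
  have q2: "q = 1 / 2 powr (2 / real N)" by (simp add: q_def powr_divide)
  have "1 < (2::real) powr (2 / real N)" using N by (intro gr_one_powr) auto
  then have q: "0 < q" "q < 1" unfolding q2 by auto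
  have cZ2: "cZ N = sqrt (2 / (N * (1 - q)))"
    by (simp add: cZ_def q_def real_sqrt_mult[symmetric])
  have cZle: "cZ N \<le> c \<longleftrightarrow> 2 / (N * (1 - q)) \<le> c\<^sup>2"
    unfolding cZ2 using c by (metis real_sqrt_le_iff real_sqrt_abs abs_of_pos)
  show ?thesis
  proof (cases "alpha N c > 0")
    case False
    then have "c\<^sup>2 * N \<le> 2" using N c by (simp add: alpha_def field_simps)
    then have h1: "c\<^sup>2 \<le> 2 / N" using N by (simp add: field_simps)
    have h2: "2 / N < 2 / (N * (1 - q))" using q N by (simp add: field_simps)
    have "\<not> cZ N \<le> c" unfolding cZle using h1 h2 by linarith
    then show ?thesis using False by (simp add: Bc_def top_unique)
  next
    case True
    have "Bc N c \<le> 2 \<longleftrightarrow> (1 / alpha N c) powr (N / 2) \<le> 2"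
    proof -
      have two: "(2::ennreal) = ennreal 2" by simp
      show ?thesis using True unfolding Bc_def two by (simp del: ennreal_numeral)
    qed
    also have "\<dots> \<longleftrightarrow> 1 / alpha N c \<le> 2 powr (2 / N)"
      using True N by (subst powr_le_iff_root) auto
    also have "2 powr (2 / N) = 1 / q" by (simp add: q_def powr_divide)
    also have "1 / alpha N c \<le> 1 / q \<longleftrightarrow> q \<le> alpha N c" using True q by (simp add: field_simps)
    also have "\<dots> \<longleftrightarrow> 2 / (N * (1 - q)) \<le> c\<^sup>2"
      using q N c by (simp add: alpha_def field_simps)
    finally show ?thesis using cZle by simp
  qed
qed



lemma cZ_pos: "N \<ge> 1 \<Longrightarrow> cZ N > 0"
proof -
  assume N: "N \<ge> 1"
  have "1 < (2::real) powr (2 / real N)" using N by (intro gr_one_powr) auto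
  then have "(1/2::real) powr (2 / real N) < 1" by (simp add: powr_divide)
  then show ?thesis using N by (simp add: cZ_def)
qed

lemma psi2_Z:
  fixes Z :: "'b \<Rightarrow> 'a::euclidean_space"
  assumes Z: "distributed M' lborel Z (\<lambda>x. ennreal (gauss_cov_inv_dim x))"
  shows "psi2_norm M' Z = cZ DIM('a)"
proof -
  have N: "DIM('a) \<ge> 1" by (simp add: DIM_positive Suc_le_eq)
  have "{c::real. c > 0 \<and> (\<integral>\<^sup>+\<omega>. ennreal (exp ((norm (Z \<omega>))\<^sup>2 / c\<^sup>2)) \<partial>M') \<le> 2} = {cZ DIM('a)..}"
  proof (intro set_eqI iffI)
    fix c :: real assume "c \<in> {c. c > 0 \<and> (\<integral>\<^sup>+\<omega>. ennreal (exp ((norm (Z \<omega>))\<^sup>2 / c\<^sup>2)) \<partial>M') \<le> 2}"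
    then show "c \<in> {cZ DIM('a)..}" using Bc_le2[OF N] Z_int[OF Z] by auto
  next
    fix c :: real assume c: "c \<in> {cZ DIM('a)..}"
    then have "c > 0" using cZ_pos[OF N] by auto
    then show "c \<in> {c. c > 0 \<and> (\<integral>\<^sup>+\<omega>. ennreal (exp ((norm (Z \<omega>))\<^sup>2 / c\<^sup>2)) \<partial>M') \<le> 2}"
      using c Bc_le2[OF N] Z_int[OF Z] by auto
  qed
  then show ?thesis unfolding psi2_norm_def by simp
qed

lemma En_mono:
  assumes "0 < c'" "c' \<le> c" shows "En M X n c \<le> En M X n c'"
  unfolding En_def
proof (intro nn_integral_mono ennreal_leI)
  fix \<omega>
  have "(norm (\<Sum>j\<in>{1..n}. (1 / sqrt (real n)) *\<^sub>R X j \<omega>))\<^sup>2 / c\<^sup>2 \<le> (norm (\<Sum>j\<in>{1..n}. (1 / sqrt (real n)) *\<^sub>R X j \<omega>))\<^sup>2 / c'\<^sup>2"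
    using assms by (intro divide_left_mono power_mono) auto
  then show "exp ((norm (\<Sum>j\<in>{1..n}. (1 / sqrt (real n)) *\<^sub>R X j \<omega>))\<^sup>2 / c\<^sup>2) \<le> exp ((norm (\<Sum>j\<in>{1..n}. (1 / sqrt (real n)) *\<^sub>R X j \<omega>))\<^sup>2 / c'\<^sup>2)"
    by simp
qed

lemma main_generic:
  fixes X :: "nat \<Rightarrow> 'm \<Rightarrow> 'a::euclidean_space" and M :: "'m measure"
  assumes M: "prob_space M" and ind: "prob_space.indep_vars M (\<lambda>_. borel) X UNIV"
    and dist: "\<And>j. distr M borel (X j) = uniform_sphere"
  shows "(\<lambda>n. psi2_norm M (\<lambda>\<omega>. (\<Sum>j\<in>{1..n}. (1 / sqrt (real n)) *\<^sub>R X j \<omega>))) \<longlonglongrightarrow> cZ DIM('a)"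
proof -
  define \<psi> where "\<psi> n = psi2_norm M (\<lambda>\<omega>. (\<Sum>j\<in>{1..n}. (1 / sqrt (real n)) *\<^sub>R X j \<omega>))" for n
  define A where "A n = {c::real. c > 0 \<and> En M X n c \<le> 2}" for n
  have psiA: "\<psi> n = Inf (A n)" for n by (simp add: \<psi>_def A_def psi2_norm_def En_def)
  have N: "DIM('a) \<ge> 1" by (simp add: DIM_positive Suc_le_eq)
  define z where "z = cZ DIM('a)"
  have z: "z > 0" using cZ_pos[OF N] by (simp add: z_def)
  have bdd: "bdd_below (A n)" for n unfolding A_def by (rule bdd_belowI[of _ 0]) auto
  have zA: "z \<in> A n" if n: "n \<ge> 1" for n
  proof -
    have B: "Bc DIM('a) z \<le> 2" using Bc_le2[OF N z] by (simp add: z_def)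
    then have al: "alpha DIM('a) z > 0" by (auto simp: Bc_def top_unique split: if_splits)
    have "En M X n z \<le> Bc DIM('a) z" by (rule E_upper[OF M ind dist z n al])
    then show ?thesis using B z by (simp add: A_def)
  qed
  have up: "\<psi> n \<le> z" if "n \<ge> 1" for n unfolding psiA by (rule cInf_lower[OF zA[OF that] bdd])
  have low: "eventually (\<lambda>n. c \<le> \<psi> n) sequentially" if c: "0 < c" "c < z" for c
  proof -
    have "\<not> Bc DIM('a) c \<le> 2" using Bc_le2[OF N c(1)] c by (simp add: z_def)
    then have "2 < liminf (\<lambda>n. En M X n c)" using E_liminf[OF M ind dist c(1)] by simp
    then have ev: "eventually (\<lambda>n. 2 < En M X n c) sequentially" by (rule less_LiminfD)
    show ?thesis using ev eventually_ge_at_top[of 1]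
    proof eventually_elim
      case (elim n)
      show "c \<le> \<psi> n" unfolding psiA
      proof (rule cInf_greatest)
        show "A n \<noteq> {}" using zA[OF elim(2)] by auto
      next
        fix x assume x: "x \<in> A n"
        show "c \<le> x"
        proof (rule ccontr)
          assume "\<not> c \<le> x"
          then have "En M X n c \<le> En M X n x" using x by (intro En_mono) (auto simp: A_def)
          then show False using x elim(1) by (auto simp: A_def)
        qed
      qed
    qed
  qed
  have "\<psi> \<longlonglongrightarrow> z"
  proof (rule order_tendstoI)
    fix a assume a: "a < z"
    define c where "c = (max a 0 + z) / 2"
    have c: "0 < c" "c < z" "a < c" using a z by (auto simp: c_def max_def)
    show "eventually (\<lambda>n. a < \<psi> n) sequentially"
      using low[OF c(1,2)] by eventually_elim (use c(3) in linarith)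
  next
    fix b assume b: "z < b"
    show "eventually (\<lambda>n. \<psi> n < b) sequentially"
      using eventually_ge_at_top[of 1] by eventually_elim (use up b in force)
  qed
  moreover have "\<psi> = (\<lambda>n. psi2_norm M (\<lambda>\<omega>. (\<Sum>j\<in>{1..n}. (1 / sqrt (real n)) *\<^sub>R X j \<omega>)))"
    by (rule ext) (simp only: \<psi>_def)
  ultimately show ?thesis by (simp add: z_def)
qed



theorem mainTheorem4:
  fixes M :: "'a measure" and X :: "nat \<Rightarrow> 'a \<Rightarrow> real ^ 'n"
    and M' :: "'b measure" and Z :: "'b \<Rightarrow> real ^ 'n"
  assumes "prob_space M"
    and "prob_space.indep_vars M (\<lambda>_. borel) X UNIV"
    and "\<And>j. distr M borel (X j) = uniform_sphere"
    and "prob_space M'"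
    and "distributed M' lborel Z (\<lambda>x. ennreal (gauss_cov_inv_dim x))"
  shows "((\<lambda>n. psi2_norm M (\<lambda>\<omega>. (\<Sum>j\<in>{1..n}. (1 / sqrt (real n)) *\<^sub>R X j \<omega>)))
            \<longlonglongrightarrow> psi2_norm M' Z)
     \<and> psi2_norm M' Z = sqrt (2 / real CARD('n)) * sqrt (1 / (1 - (1/2) powr (2 / real CARD('n))))"
proof -
  have Zp: "psi2_norm M' Z = cZ DIM(real ^ 'n)" by (rule psi2_Z[OF assms(5)])
  have Lp: "(\<lambda>n. psi2_norm M (\<lambda>\<omega>. (\<Sum>j\<in>{1..n}. (1 / sqrt (real n)) *\<^sub>R X j \<omega>))) \<longlonglongrightarrow> cZ DIM(real ^ 'n)"
    by (rule main_generic[OF assms(1-3)])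
  have c: "cZ DIM(real ^ 'n) = sqrt (2 / real CARD('n)) * sqrt (1 / (1 - (1/2) powr (2 / real CARD('n))))"
    by (simp add: cZ_def)
  show ?thesis using Zp Lp c by simp
qed

end
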